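(* Let $\Gamma$ be a finite connected tetravalent $G$-half-arc-transitive graph for some $G\le\mathrm{Aut}(\Gamma)$ having at least three $G$-alternating cycles, and let $r=\mathrm{rad}_G(\Gamma)$, $a=\mathrm{att}_G(\Gamma)$. Then the graph $\mathrm{Alt}_G(\Gamma)$ is regular of valence $2r/a$, and the induced action of $G$ on $\mathrm{Alt}_G(\Gamma)$ is vertex- and edge-transitive. Moreover, this action is arc-transitive if and only if $a$ does not divide $r$.
   Context: All graphs are finite and simple. For a tetravalent graph $\Gamma$ and $G\le \mathrm{Aut}(\Gamma)$, $\Gamma$ is $G$-half-arc-transitive if $G$ acts transitively on vertices and edges but not on arcs. Then the $G$-orbits on arcs give two paired orientations of the edges, and for each, every vertex is the tail of two and the head of two incident edges. A $G$-alternating cycle is a cycle in which every two consecutive edges have a common head or a common tail. All $G$-alternating cycles have the same length $2\,\mathrm{rad}_G(\Gamma)$, and any two $G$-alternating cycles sharing a vertex meet in the same number $\mathrm{att}_G(\Gamma)$ of vertices; it is known that $\mathrm{att}_G(\Gamma)$ divides $2\,\mathrm{rad}_G(\Gamma)$. The graph of $G$-alternating cycles $\mathrm{Alt}_G(\Gamma)$ has the $G$-alternating cycles of $\Gamma$ as vertices, two being adjacent whenever they have at least one vertex in common; $G$ acts on it naturally. *)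

theory Defs
  imports Complex_Main "HOL-Algebra.Bij"
begin

definition simple_graph :: "'a set \<Rightarrow> ('a \<Rightarrow> 'a \<Rightarrow> bool) \<Rightarrow> bool" where
  "simple_graph V E \<longleftrightarrow> finite V \<and> (\<forall>u v. E u v \<longrightarrow> u \<in> V \<and> v \<in> V)
     \<and> (\<forall>u v. E u v \<longrightarrow> E v u) \<and> (\<forall>u. \<not> E u u)"

definition connected_graph :: "'a set \<Rightarrow> ('a \<Rightarrow> 'a \<Rightarrow> bool) \<Rightarrow> bool" where
  "connected_graph V E \<longleftrightarrow> V \<noteq> {} \<and> (\<forall>u\<in>V. \<forall>v\<in>V. E\<^sup>*\<^sup>* u v)"

definition tetravalent :: "'a set \<Rightarrow> ('a \<Rightarrow> 'a \<Rightarrow> bool) \<Rightarrow> bool" where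
  "tetravalent V E \<longleftrightarrow> (\<forall>v\<in>V. card {u\<in>V. E v u} = 4)"

definition Aut :: "'a set \<Rightarrow> ('a \<Rightarrow> 'a \<Rightarrow> bool) \<Rightarrow> ('a \<Rightarrow> 'a) set" where
  "Aut V E = {g \<in> Bij V. \<forall>u\<in>V. \<forall>v\<in>V. E u v \<longleftrightarrow> E (g u) (g v)}"

definition arcs :: "'a set \<Rightarrow> ('a \<Rightarrow> 'a \<Rightarrow> bool) \<Rightarrow> ('a \<times> 'a) set" where
  "arcs V E = {(u, v). u \<in> V \<and> v \<in> V \<and> E u v}"

definition edges :: "'a set \<Rightarrow> ('a \<Rightarrow> 'a \<Rightarrow> bool) \<Rightarrow> 'a set set" where
  "edges V E = {{u, v} | u v. u \<in> V \<and> v \<in> V \<and> E u v}"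

definition vertex_transitive :: "('a \<Rightarrow> 'a) set \<Rightarrow> 'a set \<Rightarrow> bool" where
  "vertex_transitive G V \<longleftrightarrow> (\<forall>u\<in>V. \<forall>v\<in>V. \<exists>g\<in>G. g u = v)"

definition edge_transitive :: "('a \<Rightarrow> 'a) set \<Rightarrow> 'a set \<Rightarrow> ('a \<Rightarrow> 'a \<Rightarrow> bool) \<Rightarrow> bool" where
  "edge_transitive G V E \<longleftrightarrow> (\<forall>e\<in>edges V E. \<forall>f\<in>edges V E. \<exists>g\<in>G. g ` e = f)"

definition arc_transitive :: "('a \<Rightarrow> 'a) set \<Rightarrow> 'a set \<Rightarrow> ('a \<Rightarrow> 'a \<Rightarrow> bool) \<Rightarrow> bool" where
  "arc_transitive G V E \<longleftrightarrow>
     (\<forall>(u, v)\<in>arcs V E. \<forall>(x, y)\<in>arcs V E. \<exists>g\<in>G. g u = x \<and> g v = y)"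

definition half_arc_transitive ::
  "'a set \<Rightarrow> ('a \<Rightarrow> 'a \<Rightarrow> bool) \<Rightarrow> ('a \<Rightarrow> 'a) set \<Rightarrow> bool" where
  "half_arc_transitive V E G \<longleftrightarrow>
     vertex_transitive G V \<and> edge_transitive G V E \<and> \<not> arc_transitive G V E"

text \<open>The G-orbit of an arc; an orientation is the G-orbit of a chosen arc
(the two G-orbits on arcs are paired, and both give the same alternating cycles).\<close>

definition arc_orbit :: "('a \<Rightarrow> 'a) set \<Rightarrow> 'a \<times> 'a \<Rightarrow> ('a \<times> 'a) set" where
  "arc_orbit G a = {(g (fst a), g (snd a)) | g. g \<in> G}"

definition orientation ::
  "'a set \<Rightarrow> ('a \<Rightarrow> 'a \<Rightarrow> bool) \<Rightarrow> ('a \<Rightarrow> 'a) set \<Rightarrow> ('a \<times> 'a) set" where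
  "orientation V E G = arc_orbit G (SOME a. a \<in> arcs V E)"

definition is_cycle_list :: "'a set \<Rightarrow> ('a \<Rightarrow> 'a \<Rightarrow> bool) \<Rightarrow> 'a list \<Rightarrow> bool" where
  "is_cycle_list V E vs \<longleftrightarrow> length vs \<ge> 3 \<and> distinct vs \<and> set vs \<subseteq> V \<and>
     (\<forall>i < length vs. E (vs ! i) (vs ! ((i + 1) mod length vs)))"

definition alternating_list :: "('a \<times> 'a) set \<Rightarrow> 'a list \<Rightarrow> bool" where
  "alternating_list Ori vs \<longleftrightarrow>
     (\<forall>i < length vs.
        let n = length vs; p = vs ! ((i + n - 1) mod n); c = vs ! i; s = vs ! ((i + 1) mod n)
        in ((p, c) \<in> Ori \<and> (s, c) \<in> Ori) \<or> ((c, p) \<in> Ori \<and> (c, s) \<in> Ori))"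

definition cycle_edges :: "'a list \<Rightarrow> 'a set set" where
  "cycle_edges vs = {{vs ! i, vs ! ((i + 1) mod length vs)} | i. i < length vs}"

definition alt_cycles ::
  "'a set \<Rightarrow> ('a \<Rightarrow> 'a \<Rightarrow> bool) \<Rightarrow> ('a \<Rightarrow> 'a) set \<Rightarrow> 'a set set set" where
  "alt_cycles V E G = {cycle_edges vs | vs.
      is_cycle_list V E vs \<and> alternating_list (orientation V E G) vs}"

definition cverts :: "'a set set \<Rightarrow> 'a set" where
  "cverts C = \<Union> C"

text \<open>rad: half the common length of the G-alternating cycles.\<close>

definition rad :: "'a set \<Rightarrow> ('a \<Rightarrow> 'a \<Rightarrow> bool) \<Rightarrow> ('a \<Rightarrow> 'a) set \<Rightarrow> nat" where
  "rad V E G = card (SOME C. C \<in> alt_cycles V E G) div 2"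

text \<open>att: the common number of vertices in which two distinct G-alternating
cycles sharing a vertex meet.\<close>

definition att :: "'a set \<Rightarrow> ('a \<Rightarrow> 'a \<Rightarrow> bool) \<Rightarrow> ('a \<Rightarrow> 'a) set \<Rightarrow> nat" where
  "att V E G = (let CD = (SOME (C, D). C \<in> alt_cycles V E G \<and> D \<in> alt_cycles V E G \<and>
        C \<noteq> D \<and> cverts C \<inter> cverts D \<noteq> {})
     in card (cverts (fst CD) \<inter> cverts (snd CD)))"

definition alt_adj ::
  "'a set \<Rightarrow> ('a \<Rightarrow> 'a \<Rightarrow> bool) \<Rightarrow> ('a \<Rightarrow> 'a) set \<Rightarrow> 'a set set \<Rightarrow> 'a set set \<Rightarrow> bool" where
  "alt_adj V E G C D \<longleftrightarrow> C \<in> alt_cycles V E G \<and> D \<in> alt_cycles V E G \<and>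
     C \<noteq> D \<and> cverts C \<inter> cverts D \<noteq> {}"

definition cyc_act :: "('a \<Rightarrow> 'a) \<Rightarrow> 'a set set \<Rightarrow> 'a set set" where
  "cyc_act g C = (\<lambda>e. g ` e) ` C"

end

theory Submission
  imports Defs
begin


locale hat =
  fixes V :: "'a set" and E :: "'a \<Rightarrow> 'a \<Rightarrow> bool" and G :: "('a \<Rightarrow> 'a) set"
  assumes sg: "simple_graph V E" and tv: "tetravalent V E"
    and sub: "subgroup G (BijGroup V)" and aut: "G \<subseteq> Aut V E"
    and hat: "half_arc_transitive V E G"
    and three: "card (alt_cycles V E G) \<ge> 3"
begin

abbreviation "AC \<equiv> alt_cycles V E G"
abbreviation "Ori \<equiv> orientation V E G"

lemma finV: "finite V" using sg by (simp add: simple_graph_def)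
lemma E_V: "E u v \<Longrightarrow> u \<in> V \<and> v \<in> V" using sg by (simp add: simple_graph_def)
lemma E_sym: "E u v \<Longrightarrow> E v u" using sg by (simp add: simple_graph_def)
lemma E_irr: "\<not> E u u" using sg by (simp add: simple_graph_def)

lemma G_Bij: "g \<in> G \<Longrightarrow> g \<in> Bij V"
  using subgroup.subset[OF sub] by (auto simp: BijGroup_def)
lemma G_bij: "g \<in> G \<Longrightarrow> bij_betw g V V"
  using G_Bij by (simp add: Bij_def)
lemma G_inj: "g \<in> G \<Longrightarrow> inj_on g V"
  using G_bij bij_betw_imp_inj_on by blast
lemma G_V: "g \<in> G \<Longrightarrow> x \<in> V \<Longrightarrow> g x \<in> V"
  using G_bij bij_betwE by blast
lemma G_img: "g \<in> G \<Longrightarrow> g ` V = V"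
  using G_bij bij_betw_imp_surj_on by blast
lemma G_adj: "g \<in> G \<Longrightarrow> u \<in> V \<Longrightarrow> v \<in> V \<Longrightarrow> E (g u) (g v) \<longleftrightarrow> E u v"
  using aut by (auto simp: Aut_def)

definition comp :: "('a \<Rightarrow> 'a) \<Rightarrow> ('a \<Rightarrow> 'a) \<Rightarrow> ('a \<Rightarrow> 'a)" where
  "comp g h = compose V g h"
definition ginv :: "('a \<Rightarrow> 'a) \<Rightarrow> ('a \<Rightarrow> 'a)" where
  "ginv g = (\<lambda>x\<in>V. inv_into V g x)"

lemma comp_G: "g \<in> G \<Longrightarrow> h \<in> G \<Longrightarrow> comp g h \<in> G"
proof -
  assume a: "g \<in> G" "h \<in> G"
  have "g \<otimes>\<^bsub>BijGroup V\<^esub> h \<in> G" using subgroup.m_closed[OF sub a] .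
  moreover have "g \<otimes>\<^bsub>BijGroup V\<^esub> h = comp g h"
    using G_Bij[OF a(1)] G_Bij[OF a(2)] by (simp add: BijGroup_def comp_def)
  ultimately show ?thesis by simp
qed
lemma comp_apply: "x \<in> V \<Longrightarrow> comp g h x = g (h x)"
  by (simp add: comp_def compose_def)

lemma ginv_G: "g \<in> G \<Longrightarrow> ginv g \<in> G"
proof -
  assume a: "g \<in> G"
  have "inv\<^bsub>BijGroup V\<^esub> g \<in> G" using subgroup.m_inv_closed[OF sub a] .
  thus ?thesis using inv_BijGroup[OF G_Bij[OF a]] by (simp add: ginv_def)
qed
lemma ginv_l: "g \<in> G \<Longrightarrow> x \<in> V \<Longrightarrow> ginv g (g x) = x"
  using G_V[of g x] G_inj by (simp add: ginv_def inv_into_f_f)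
lemma ginv_r: "g \<in> G \<Longrightarrow> x \<in> V \<Longrightarrow> g (ginv g x) = x"
  using G_img[of g] by (simp add: ginv_def f_inv_into_f)

lemma AC_nonempty: "AC \<noteq> {}" using three by auto
lemma finAC: "finite AC" proof (rule ccontr) assume "infinite AC" thus False using three by simp qed

lemma some_cycle: "\<exists>vs. is_cycle_list V E vs \<and> alternating_list Ori vs"
  using AC_nonempty unfolding alt_cycles_def by auto

lemma arcs_ne: "arcs V E \<noteq> {}"
proof -
  obtain vs where "is_cycle_list V E vs" using some_cycle by blast
  hence "E (vs!0) (vs!1)"
    unfolding is_cycle_list_def by (auto dest!: spec[of _ 0])
  hence "vs!0 \<in> V" "vs!1 \<in> V" "E (vs!0) (vs!1)" using E_V by auto
  thus ?thesis unfolding arcs_def by blast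
qed

definition "a0 = (SOME a. a \<in> arcs V E)"
lemma a0_arc: "a0 \<in> arcs V E" unfolding a0_def using arcs_ne some_in_eq by blast

lemma Ori_iff: "(x,y) \<in> Ori \<longleftrightarrow> (\<exists>g\<in>G. x = g (fst a0) \<and> y = g (snd a0))"
  unfolding orientation_def arc_orbit_def a0_def[symmetric] by auto

lemma Ori_arc: "(x,y) \<in> Ori \<Longrightarrow> x \<in> V \<and> y \<in> V \<and> E x y"
proof -
  assume "(x,y) \<in> Ori"
  then obtain g where g: "g \<in> G" "x = g (fst a0)" "y = g (snd a0)" using Ori_iff by blast
  have "fst a0 \<in> V" "snd a0 \<in> V" "E (fst a0) (snd a0)" using a0_arc by (auto simp: arcs_def)
  thus ?thesis using g G_V G_adj by auto
qed

lemma Ori_G: "(x,y) \<in> Ori \<Longrightarrow> g \<in> G \<Longrightarrow> (g x, g y) \<in> Ori"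
proof -
  assume a: "(x,y) \<in> Ori" "g \<in> G"
  then obtain h where h: "h \<in> G" "x = h (fst a0)" "y = h (snd a0)" using Ori_iff by blast
  have "fst a0 \<in> V" "snd a0 \<in> V" using a0_arc by (auto simp: arcs_def)
  hence "g x = comp g h (fst a0)" "g y = comp g h (snd a0)" using h by (auto simp: comp_apply)
  thus ?thesis using comp_G[OF a(2) h(1)] Ori_iff by blast
qed

lemma Ori_trans: "(x,y) \<in> Ori \<Longrightarrow> (x',y') \<in> Ori \<Longrightarrow> \<exists>g\<in>G. g x = x' \<and> g y = y'"
proof -
  assume a: "(x,y) \<in> Ori" "(x',y') \<in> Ori"
  obtain h where h: "h \<in> G" "x = h (fst a0)" "y = h (snd a0)" using a(1) Ori_iff by blast
  obtain k where k: "k \<in> G" "x' = k (fst a0)" "y' = k (snd a0)" using a(2) Ori_iff by blast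
  have v: "fst a0 \<in> V" "snd a0 \<in> V" using a0_arc by (auto simp: arcs_def)
  have "comp k (ginv h) \<in> G" using comp_G ginv_G h k by blast
  moreover have "comp k (ginv h) x = x'" "comp k (ginv h) y = y'"
    using h k v G_V ginv_l by (auto simp: comp_apply)
  ultimately show ?thesis by blast
qed

lemma Ori_edge: "E x y \<Longrightarrow> (x,y) \<in> Ori \<or> (y,x) \<in> Ori"
proof -
  assume e: "E x y"
  have v: "fst a0 \<in> V" "snd a0 \<in> V" "E (fst a0) (snd a0)" using a0_arc by (auto simp: arcs_def)
  have "{fst a0, snd a0} \<in> edges V E" "{x,y} \<in> edges V E" using v e E_V unfolding edges_def by blast+
  then obtain g where g: "g \<in> G" "g ` {fst a0, snd a0} = {x,y}"
    using hat unfolding half_arc_transitive_def edge_transitive_def by blast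
  hence "{g (fst a0), g (snd a0)} = {x,y}" by simp
  hence "(g (fst a0) = x \<and> g (snd a0) = y) \<or> (g (fst a0) = y \<and> g (snd a0) = x)"
    by (simp add: doubleton_eq_iff)
  thus ?thesis using g(1) Ori_iff by metis
qed

lemma Ori_asym: "(x,y) \<in> Ori \<Longrightarrow> (y,x) \<notin> Ori"
proof
  assume a: "(x,y) \<in> Ori" "(y,x) \<in> Ori"
  have all: "(p,q) \<in> Ori" if "(p,q) \<in> arcs V E" for p q
  proof -
    have "E p q" using that by (simp add: arcs_def)
    hence "(p,q) \<in> Ori \<or> (q,p) \<in> Ori" by (rule Ori_edge)
    moreover have "(q,p) \<in> Ori \<Longrightarrow> (p,q) \<in> Ori"
    proof -
      assume "(q,p) \<in> Ori"
      then obtain g where "g \<in> G" "g y = q" "g x = p" using Ori_trans[OF a(2)] by blast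
      thus ?thesis using Ori_G[OF a(1)] by auto
    qed
    ultimately show ?thesis by blast
  qed
  have "arc_transitive G V E"
    unfolding arc_transitive_def using all Ori_trans by fast
  thus False using hat unfolding half_arc_transitive_def by blast
qed

end


definition cyc :: "'a list \<Rightarrow> int \<Rightarrow> 'a" where
  "cyc vs j = vs ! nat (j mod int (length vs))"

lemma idx1: "0 < (n::nat) \<Longrightarrow> (nat (j mod int n) + 1) mod n = nat ((j+1) mod int n)"
proof -
  assume n: "0 < n"
  have "int ((nat (j mod int n) + 1) mod n) = (j mod int n + 1) mod int n"
    using n by (simp add: zmod_int add.commute)
  also have "\<dots> = (j + 1) mod int n" by (metis mod_add_left_eq)
  finally show ?thesis by (metis nat_int)
qed

lemma idx2: "0 < (n::nat) \<Longrightarrow> (nat (j mod int n) + n - 1) mod n = nat ((j - 1) mod int n)"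
proof -
  assume n: "0 < n"
  have "int ((nat (j mod int n) + n - 1) mod n) = (j mod int n + int n - 1) mod int n"
    using n by (simp add: zmod_int of_nat_diff)
  also have "\<dots> = (j + int n - 1) mod int n" by (metis add_diff_eq mod_add_left_eq)
  also have "\<dots> = (j - 1) mod int n" by (metis add.commute add_diff_eq mod_add_self1)
  finally show ?thesis by (metis nat_int)
qed

lemma nat_mod_lt: "0 < (n::nat) \<Longrightarrow> nat (j mod int n) < n"
  by (simp add: nat_less_iff)

lemma cyc_mod: "cyc vs (j mod int (length vs)) = cyc vs j"
  by (simp add: cyc_def)

lemma cyc_per: "cyc vs (j + int (length vs) * k) = cyc vs j"
  by (simp add: cyc_def)

lemma cyc_per1: "cyc vs (j + int (length vs)) = cyc vs j"
  using cyc_per[of vs j 1] by simp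

lemma cyc_nat: "i < length vs \<Longrightarrow> cyc vs (int i) = vs ! i"
  by (simp add: cyc_def)

lemma cyc_set: "0 < length vs \<Longrightarrow> cyc vs j \<in> set vs"
  by (simp add: cyc_def nat_mod_lt)

lemma set_cyc: "0 < length vs \<Longrightarrow> set vs = range (cyc vs)"
proof
  assume n: "0 < length vs"
  show "range (cyc vs) \<subseteq> set vs" using cyc_set[OF n] by blast
  show "set vs \<subseteq> range (cyc vs)"
  proof
    fix x assume "x \<in> set vs"
    then obtain i where "i < length vs" "vs ! i = x" by (auto simp: in_set_conv_nth)
    thus "x \<in> range (cyc vs)" using cyc_nat by (metis rangeI)
  qed
qed

lemma cyc_eq_iff: "distinct vs \<Longrightarrow> 0 < length vs \<Longrightarrow>
   cyc vs i = cyc vs j \<longleftrightarrow> i mod int (length vs) = j mod int (length vs)"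
proof -
  assume d: "distinct vs" and n: "0 < length vs"
  have "cyc vs i = cyc vs j \<longleftrightarrow> nat (i mod int (length vs)) = nat (j mod int (length vs))"
    unfolding cyc_def using d n nat_mod_lt nth_eq_iff_index_eq by metis
  also have "\<dots> \<longleftrightarrow> i mod int (length vs) = j mod int (length vs)"
    using n by (simp add: eq_nat_nat_iff)
  finally show ?thesis .
qed

context hat begin

lemma cl: "is_cycle_list V E vs \<Longrightarrow> 3 \<le> length vs \<and> distinct vs \<and> set vs \<subseteq> V \<and> 0 < length vs"
  unfolding is_cycle_list_def by auto

lemma cyc_E: "is_cycle_list V E vs \<Longrightarrow> E (cyc vs j) (cyc vs (j+1))"
proof -
  assume c: "is_cycle_list V E vs"
  hence n: "0 < length vs" using cl by blast
  have "E (vs ! nat (j mod int (length vs))) (vs ! ((nat (j mod int (length vs)) + 1) mod length vs))"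
    using c nat_mod_lt[OF n] unfolding is_cycle_list_def by blast
  thus ?thesis using idx1[OF n] by (simp add: cyc_def)
qed

lemma cyc_V: "is_cycle_list V E vs \<Longrightarrow> cyc vs j \<in> V"
  using cyc_set[of vs j] cl by blast

lemma cyc_alt: "is_cycle_list V E vs \<Longrightarrow> alternating_list Ori vs \<Longrightarrow>
   ((cyc vs (j-1), cyc vs j) \<in> Ori \<and> (cyc vs (j+1), cyc vs j) \<in> Ori) \<or>
   ((cyc vs j, cyc vs (j-1)) \<in> Ori \<and> (cyc vs j, cyc vs (j+1)) \<in> Ori)"
proof -
  assume c: "is_cycle_list V E vs" and a: "alternating_list Ori vs"
  hence n: "0 < length vs" using cl by blast
  note i = nat_mod_lt[OF n, of j]
  have e1: "(nat (j mod int (length vs)) + Suc 0) mod length vs = nat ((j + 1) mod int (length vs))"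
    using idx1[OF n, of j] by simp
  have e2: "(nat (j mod int (length vs)) + length vs - Suc 0) mod length vs = nat ((j - 1) mod int (length vs))"
    using idx2[OF n, of j] by simp
  show ?thesis using a[unfolded alternating_list_def, rule_format, OF i]
    unfolding Let_def cyc_def by (simp only: e1 e2 One_nat_def)
qed

lemma cycle_edges_cyc: "0 < length vs \<Longrightarrow> cycle_edges vs = range (\<lambda>j. {cyc vs j, cyc vs (j+1)})"
proof
  assume n: "0 < length vs"
  show "cycle_edges vs \<subseteq> range (\<lambda>j. {cyc vs j, cyc vs (j+1)})"
  proof
    fix e assume "e \<in> cycle_edges vs"
    then obtain i where i: "i < length vs" "e = {vs ! i, vs ! ((i + 1) mod length vs)}"
      unfolding cycle_edges_def by blast
    have "(i + 1) mod length vs = nat ((int i + 1) mod int (length vs))"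
      using idx1[OF n, of "int i"] i(1) by simp
    hence "e = {cyc vs (int i), cyc vs (int i + 1)}" using i by (simp add: cyc_def)
    thus "e \<in> range (\<lambda>j. {cyc vs j, cyc vs (j+1)})" by blast
  qed
  show "range (\<lambda>j. {cyc vs j, cyc vs (j+1)}) \<subseteq> cycle_edges vs"
  proof
    fix e assume "e \<in> range (\<lambda>j. {cyc vs j, cyc vs (j+1)})"
    then obtain j where j: "e = {cyc vs j, cyc vs (j+1)}" by blast
    let ?i = "nat (j mod int (length vs))"
    have "e = {vs ! ?i, vs ! ((?i + 1) mod length vs)}"
      using j idx1[OF n, of j] by (simp add: cyc_def)
    thus "e \<in> cycle_edges vs" unfolding cycle_edges_def using nat_mod_lt[OF n] by blast
  qed
qed

end


lemma cyc_cong: "i mod int (length vs) = j mod int (length vs) \<Longrightarrow> cyc vs (i + k) = cyc vs (j + k)"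
proof -
  assume "i mod int (length vs) = j mod int (length vs)"
  hence "(i + k) mod int (length vs) = (j + k) mod int (length vs)" by (metis mod_add_cong)
  thus ?thesis by (metis cyc_mod)
qed

context hat begin

definition inn :: "'a \<Rightarrow> 'a set" where "inn x = {y. (y,x) \<in> Ori}"
definition out :: "'a \<Rightarrow> 'a set" where "out x = {y. (x,y) \<in> Ori}"
definition nb :: "'a set set \<Rightarrow> 'a \<Rightarrow> 'a set" where "nb C x = {y. {x,y} \<in> C}"

abbreviation "gc vs \<equiv> is_cycle_list V E vs \<and> alternating_list Ori vs"

lemma AC_iff: "C \<in> AC \<longleftrightarrow> (\<exists>vs. C = cycle_edges vs \<and> gc vs)"
  unfolding alt_cycles_def by blast

lemma inn_out_disj: "inn x \<inter> out x = {}"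
  unfolding inn_def out_def using Ori_asym by blast

lemma cyc_dir: "gc vs \<Longrightarrow> ((cyc vs j, cyc vs (j+1)) \<in> Ori) \<noteq> ((cyc vs (j+1), cyc vs j) \<in> Ori)"
  using Ori_edge[OF cyc_E[of vs j]] Ori_asym by blast

lemma cyc_ne: "gc vs \<Longrightarrow> cyc vs (j - 1) \<noteq> cyc vs (j + 1)"
proof
  assume g: "gc vs" and eq: "cyc vs (j - 1) = cyc vs (j + 1)"
  let ?n = "int (length vs)"
  have d: "distinct vs" and n: "3 \<le> length vs" "0 < length vs" using g cl by blast+
  have "(j - 1) mod ?n = (j + 1) mod ?n" using eq cyc_eq_iff[OF d n(2)] by blast
  hence "?n dvd ((j+1) - (j - 1))" by (metis mod_eq_dvd_iff)
  hence "?n dvd 2" by simp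
  hence "length vs dvd 2" by (metis int_dvd_int_iff of_nat_numeral)
  hence "length vs \<le> 2" by (simp add: dvd_imp_le)
  thus False using n by simp
qed


end

context hat begin
lemma nb_cyc: "gc vs \<Longrightarrow> nb (cycle_edges vs) (cyc vs j) = {cyc vs (j-1), cyc vs (j+1)}"
proof -
  assume g: "gc vs"
  let ?n = "int (length vs)" let ?c = "cyc vs"
  have d: "distinct vs" and n: "0 < length vs" using g cl by blast+
  have ce: "cycle_edges vs = range (\<lambda>j. {?c j, ?c (j+1)})" using cycle_edges_cyc[OF n] .
  have 1: "y \<in> {?c (j-1), ?c (j+1)}" if y: "y \<in> nb (cycle_edges vs) (?c j)" for y
  proof -
    have "{?c j, y} \<in> range (\<lambda>j. {?c j, ?c (j+1)})" using y ce unfolding nb_def by simp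
    then obtain i where i: "{?c j, y} = {?c i, ?c (i+1)}" by blast
    show "y \<in> {?c (j-1), ?c (j+1)}"
    proof (cases "?c j = ?c i")
      case True
      hence "i mod ?n = j mod ?n" using cyc_eq_iff[OF d n] by simp
      hence "?c (i+1) = ?c (j+1)" by (rule cyc_cong)
      moreover have "y = ?c (i+1)" using i True by (metis doubleton_eq_iff)
      ultimately show ?thesis by simp
    next
      case False
      hence a: "?c j = ?c (i+1)" "y = ?c i" using i by (metis doubleton_eq_iff)+
      hence "(i+1) mod ?n = j mod ?n" using cyc_eq_iff[OF d n] by simp
      hence "?c (i + 1 + -1) = ?c (j + -1)" by (rule cyc_cong)
      thus ?thesis using a by simp
    qed
  qed
  have 2: "y \<in> nb (cycle_edges vs) (?c j)" if y: "y \<in> {?c (j-1), ?c (j+1)}" for y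
  proof -
    have "{?c (j-1), ?c (j - 1 + 1)} \<in> cycle_edges vs" unfolding ce by blast
    hence "{?c j, ?c (j-1)} \<in> cycle_edges vs" by (simp add: insert_commute)
    moreover have "{?c j, ?c (j+1)} \<in> cycle_edges vs" unfolding ce by blast
    ultimately show ?thesis using y unfolding nb_def by blast
  qed
  show ?thesis using 1 2 by blast
qed
lemma cverts_cyc: "gc vs \<Longrightarrow> cverts (cycle_edges vs) = range (cyc vs)"
proof -
  assume g: "gc vs"
  have n: "0 < length vs" using g cl by blast
  show ?thesis unfolding cverts_def cycle_edges_cyc[OF n] by auto
qed

lemma cverts_set: "gc vs \<Longrightarrow> cverts (cycle_edges vs) = set vs"
  using cverts_cyc set_cyc cl by metis

lemma inn_G: assumes g: "g \<in> G" and x: "x \<in> V" shows "inn (g x) = g ` inn x"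
proof (intro Set.set_eqI iffI)
  fix z assume z: "z \<in> inn (g x)"
  hence o: "(z, g x) \<in> Ori" by (simp add: inn_def)
  hence zv: "z \<in> V" using Ori_arc by blast
  have "(ginv g z, ginv g (g x)) \<in> Ori" using Ori_G[OF o ginv_G[OF g]] .
  hence "ginv g z \<in> inn x" using ginv_l[OF g x] by (simp add: inn_def)
  thus "z \<in> g ` inn x" using ginv_r[OF g zv] by (metis imageI)
next
  fix z assume z: "z \<in> g ` inn x"
  thus "z \<in> inn (g x)" using Ori_G g by (auto simp: inn_def)
qed

lemma out_G: assumes g: "g \<in> G" and x: "x \<in> V" shows "out (g x) = g ` out x"
proof (intro Set.set_eqI iffI)
  fix z assume z: "z \<in> out (g x)"
  hence o: "(g x, z) \<in> Ori" by (simp add: out_def)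
  hence zv: "z \<in> V" using Ori_arc by blast
  have "(ginv g (g x), ginv g z) \<in> Ori" using Ori_G[OF o ginv_G[OF g]] .
  hence "ginv g z \<in> out x" using ginv_l[OF g x] by (simp add: out_def)
  thus "z \<in> g ` out x" using ginv_r[OF g zv] by (metis imageI)
next
  fix z assume z: "z \<in> g ` out x"
  thus "z \<in> out (g x)" using Ori_G g by (auto simp: out_def)
qed

lemma inn_V: "inn x \<subseteq> V" and out_V: "out x \<subseteq> V"
  using Ori_arc unfolding inn_def out_def by blast+

lemma fin_inn: "finite (inn x)" and fin_out: "finite (out x)"
  using finite_subset[OF inn_V finV] finite_subset[OF out_V finV] by auto

lemma card_G: "g \<in> G \<Longrightarrow> A \<subseteq> V \<Longrightarrow> card (g ` A) = card A"
  using G_inj card_image inj_on_subset by metis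

lemma vtrans: "x \<in> V \<Longrightarrow> y \<in> V \<Longrightarrow> \<exists>g\<in>G. g x = y"
  using hat unfolding half_arc_transitive_def vertex_transitive_def by blast

lemma head_tail_exist: "\<exists>x y. x \<in> V \<and> y \<in> V \<and> 2 \<le> card (inn x) \<and> 2 \<le> card (out y)"
proof -
  obtain vs where g: "gc vs" using some_cycle by blast
  let ?c = "cyc vs"
  have ne: "?c (0 - 1) \<noteq> ?c (0+1)" "?c (1 - 1) \<noteq> ?c (1+1)" using cyc_ne[OF g] by blast+
  have "((?c (0-1), ?c 0) \<in> Ori \<and> (?c (0+1), ?c 0) \<in> Ori) \<or> ((?c 0, ?c (0-1)) \<in> Ori \<and> (?c 0, ?c (0+1)) \<in> Ori)"
    using cyc_alt g by blast
  moreover have "((?c (1-1), ?c 1) \<in> Ori \<and> (?c (1+1), ?c 1) \<in> Ori) \<or> ((?c 1, ?c (1-1)) \<in> Ori \<and> (?c 1, ?c (1+1)) \<in> Ori)"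
    using cyc_alt g by blast
  moreover have "(?c 0, ?c 1) \<in> Ori \<longleftrightarrow> (?c 1, ?c 0) \<notin> Ori" using cyc_dir[OF g, of 0] by simp
  ultimately have "(?c (0-1) \<in> inn (?c 0) \<and> ?c (0+1) \<in> inn (?c 0) \<and> ?c (1-1) \<in> out (?c 1) \<and> ?c (1+1) \<in> out (?c 1))
     \<or> (?c (0-1) \<in> out (?c 0) \<and> ?c (0+1) \<in> out (?c 0) \<and> ?c (1-1) \<in> inn (?c 1) \<and> ?c (1+1) \<in> inn (?c 1))"
    unfolding inn_def out_def by auto
  moreover have "a \<in> A \<Longrightarrow> b \<in> A \<Longrightarrow> a \<noteq> b \<Longrightarrow> finite A \<Longrightarrow> 2 \<le> card A" for a b and A :: "'a set"
    by (metis card_2_iff card_mono empty_subsetI insert_subset)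
  moreover have "?c 0 \<in> V" "?c 1 \<in> V" using cyc_V g by blast+
  ultimately show ?thesis using ne fin_inn fin_out by metis
qed

lemma nbr_split: "x \<in> V \<Longrightarrow> {u \<in> V. E x u} = inn x \<union> out x"
  using Ori_edge Ori_arc E_sym unfolding inn_def out_def by blast

lemma deg2: "x \<in> V \<Longrightarrow> card (inn x) = 2 \<and> card (out x) = 2"
proof -
  assume x: "x \<in> V"
  obtain a b where ab: "a \<in> V" "b \<in> V" "2 \<le> card (inn a)" "2 \<le> card (out b)"
    using head_tail_exist by blast
  obtain g where g: "g \<in> G" "g a = x" using vtrans[OF ab(1) x] by blast
  obtain h where h: "h \<in> G" "h b = x" using vtrans[OF ab(2) x] by blast
  have "card (inn x) = card (inn a)" using inn_G[OF g(1) ab(1)] g card_G[OF g(1) inn_V] by simp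
  moreover have "card (out x) = card (out b)" using out_G[OF h(1) ab(2)] h card_G[OF h(1) out_V] by simp
  moreover have "card {u\<in>V. E x u} = 4" using tv x unfolding tetravalent_def by blast
  hence "card (inn x) + card (out x) = 4"
    using card_Un_disjoint[OF fin_inn fin_out inn_out_disj, of x] nbr_split[OF x] by simp
  ultimately show ?thesis using ab by linarith
qed

lemma head_or_tail: "gc vs \<Longrightarrow>
  nb (cycle_edges vs) (cyc vs j) = inn (cyc vs j) \<or> nb (cycle_edges vs) (cyc vs j) = out (cyc vs j)"
proof -
  assume g: "gc vs"
  let ?c = "cyc vs"
  have x: "?c j \<in> V" using cyc_V g by blast
  have ne: "?c (j-1) \<noteq> ?c (j+1)" using cyc_ne[OF g] by blast
  have c2: "card {?c (j-1), ?c (j+1)} = 2" using ne by simp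
  have "{?c (j-1), ?c (j+1)} \<subseteq> inn (?c j) \<or> {?c (j-1), ?c (j+1)} \<subseteq> out (?c j)"
    using cyc_alt[of vs j] g unfolding inn_def out_def by auto
  hence "{?c (j-1), ?c (j+1)} = inn (?c j) \<or> {?c (j-1), ?c (j+1)} = out (?c j)"
    using card_subset_eq[OF fin_inn] card_subset_eq[OF fin_out] deg2[OF x] c2 by metis
  thus ?thesis using nb_cyc[OF g] by simp
qed

lemma AC_edge: "C \<in> AC \<Longrightarrow> e \<in> C \<Longrightarrow> \<exists>p q. e = {p,q} \<and> p \<in> V \<and> q \<in> V \<and> E p q"
proof -
  assume C: "C \<in> AC" "e \<in> C"
  then obtain vs where vs: "C = cycle_edges vs" "gc vs" using AC_iff by blast
  have n: "0 < length vs" using vs(2) cl by blast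
  have "e \<in> range (\<lambda>j. {cyc vs j, cyc vs (j+1)})" using C(2) vs(1) cycle_edges_cyc[OF n] by simp
  then obtain j where "e = {cyc vs j, cyc vs (j+1)}" by blast
  thus ?thesis using cyc_V cyc_E vs(2) by blast
qed

lemma cverts_V: "C \<in> AC \<Longrightarrow> cverts C \<subseteq> V"
  using AC_edge unfolding cverts_def by blast

lemma nb_cases: "C \<in> AC \<Longrightarrow> x \<in> cverts C \<Longrightarrow> nb C x = inn x \<or> nb C x = out x"
proof -
  assume C: "C \<in> AC" "x \<in> cverts C"
  then obtain vs where vs: "C = cycle_edges vs" "gc vs" using AC_iff by blast
  then obtain j where "x = cyc vs j" using C(2) cverts_cyc by blast
  thus ?thesis using head_or_tail vs by blast
qed

lemma nb_eq: "C \<in> AC \<Longrightarrow> D \<in> AC \<Longrightarrow> y \<in> cverts C \<Longrightarrow> y \<in> cverts D \<Longrightarrow>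
   z \<in> nb C y \<Longrightarrow> z \<in> nb D y \<Longrightarrow> nb C y = nb D y"
  using nb_cases[of C y] nb_cases[of D y] inn_out_disj[of y] by blast

lemma nb_cverts: "z \<in> nb C y \<Longrightarrow> y \<in> cverts C \<and> z \<in> cverts C"
  unfolding nb_def cverts_def by blast

lemma AC_sub: "C \<in> AC \<Longrightarrow> D \<in> AC \<Longrightarrow> x \<in> cverts C \<Longrightarrow> x \<in> cverts D \<Longrightarrow> nb C x = nb D x \<Longrightarrow> C \<subseteq> D"
proof -
  assume C: "C \<in> AC" and D: "D \<in> AC" and x: "x \<in> cverts C" "x \<in> cverts D" and eq: "nb C x = nb D x"
  obtain vs where vs: "C = cycle_edges vs" "gc vs" using C AC_iff by blast
  let ?c = "cyc vs" let ?n = "int (length vs)"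
  have n: "0 < length vs" using vs cl by blast
  obtain j0 where j0: "x = ?c j0" using x(1) cverts_cyc vs by blast
  have step: "{?c (j0 + int k), ?c (j0 + int k + 1)} \<in> D" for k
  proof (induction k)
    case 0
    have "?c (j0+1) \<in> nb C x" using nb_cyc[OF vs(2)] vs(1) j0 by auto
    hence "?c (j0+1) \<in> nb D x" using eq by simp
    thus ?case using j0 by (simp add: nb_def)
  next
    case (Suc k)
    let ?i = "j0 + int k"
    let ?y = "?c (?i + 1)"
    have i1: "?c ?i \<in> nb D ?y" using Suc by (simp add: nb_def insert_commute)
    have yC: "?y \<in> cverts C" using vs cverts_cyc by blast
    have "nb C ?y = {?c (?i + 1 - 1), ?c (?i+1+1)}" using nb_cyc[OF vs(2)] vs(1) by blast
    hence nbC: "nb C ?y = {?c ?i, ?c (?i+2)}" by (simp add: add.assoc)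
    have "nb C ?y = nb D ?y" using nb_eq[OF C D yC] i1 nb_cverts[OF i1] nbC by blast
    hence "?c (?i + 2) \<in> nb D ?y" using nbC by blast
    hence "{?c (?i + 1), ?c (?i + 2)} \<in> D" by (simp add: nb_def)
    moreover have "j0 + int (Suc k) = ?i + 1" "j0 + int (Suc k) + 1 = ?i + 2" by simp_all
    ultimately show ?case by metis
  qed
  show "C \<subseteq> D"
  proof
    fix e assume "e \<in> C"
    then obtain i where e: "e = {?c i, ?c (i+1)}" using vs cycle_edges_cyc[OF n] by blast
    define k where "k = nat ((i - j0) mod ?n)"
    have "j0 + int k = j0 + (i - j0) mod ?n" using n by (simp add: k_def)
    hence "(j0 + int k) mod ?n = i mod ?n" by (simp add: mod_add_right_eq)
    hence "?c (j0 + int k + 0) = ?c (i + 0)" "?c (j0 + int k + 1) = ?c (i + 1)"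
      using cyc_cong by blast+
    thus "e \<in> D" using step[of k] e by simp
  qed
qed

lemma AC_eq: "C \<in> AC \<Longrightarrow> D \<in> AC \<Longrightarrow> x \<in> cverts C \<Longrightarrow> x \<in> cverts D \<Longrightarrow> nb C x = nb D x \<Longrightarrow> C = D"
  using AC_sub by (metis subset_antisym)

end

context hat begin

lemma ce_img: "cycle_edges vs = (\<lambda>i. {vs!i, vs!((i+1) mod length vs)}) ` {..<length vs}"
  unfolding cycle_edges_def by auto

lemma cyc_act_edges: "cyc_act g (cycle_edges vs) = cycle_edges (map g vs)"
proof -
  have "cyc_act g (cycle_edges vs) = (\<lambda>i. {g (vs!i), g (vs!((i+1) mod length vs))}) ` {..<length vs}"
    unfolding cyc_act_def ce_img image_image by simp
  also have "\<dots> = (\<lambda>i. {map g vs ! i, map g vs ! ((i+1) mod length (map g vs))}) ` {..<length vs}"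
  proof (rule image_cong[OF refl])
    fix i assume "i \<in> {..<length vs}"
    hence i: "i < length vs" by auto
    hence "0 < length vs" by linarith
    hence "i < length vs" "(i+1) mod length vs < length vs" using i by auto
    thus "{g (vs!i), g (vs!((i+1) mod length vs))} = {map g vs ! i, map g vs ! ((i+1) mod length (map g vs))}"
      by simp
  qed
  also have "\<dots> = cycle_edges (map g vs)" unfolding ce_img[of "map g vs"] by simp
  finally show ?thesis .
qed

lemma gc_map: assumes g: "g \<in> G" and c: "gc vs" shows "gc (map g vs)"
proof -
  have l: "3 \<le> length vs" "distinct vs" "set vs \<subseteq> V" using c cl by blast+
  have inj: "inj_on g (set vs)" using G_inj[OF g] l(3) inj_on_subset by blast
  have cl': "is_cycle_list V E (map g vs)"
    unfolding is_cycle_list_def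
  proof (intro conjI allI impI)
    show "3 \<le> length (map g vs)" using l by simp
    show "distinct (map g vs)" using l inj by (simp add: distinct_map)
    show "set (map g vs) \<subseteq> V" using l G_V[OF g] by auto
    fix i assume i: "i < length (map g vs)"
    have n: "0 < length vs" using l(1) by linarith
    have e: "E (vs ! i) (vs ! ((i + 1) mod length vs))" using c i unfolding is_cycle_list_def by simp
    have "vs ! i \<in> V" "vs ! ((i + 1) mod length vs) \<in> V" using l i n by (auto simp: subset_iff)
    thus "E (map g vs ! i) (map g vs ! ((i + 1) mod length (map g vs)))"
      using e G_adj[OF g] i n by simp
  qed
  have al: "alternating_list Ori (map g vs)"
    unfolding alternating_list_def
  proof (intro allI impI)
    fix i assume i: "i < length (map g vs)"
    have n: "0 < length vs" using l(1) by linarith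
    have "let n = length vs; p = vs ! ((i + n - 1) mod n); c = vs ! i; s = vs ! ((i + 1) mod n)
        in (p, c) \<in> Ori \<and> (s, c) \<in> Ori \<or> (c, p) \<in> Ori \<and> (c, s) \<in> Ori"
      using c i unfolding alternating_list_def by simp
    thus "let n = length (map g vs); p = map g vs ! ((i + n - 1) mod n); c = map g vs ! i;
         s = map g vs ! ((i + 1) mod n)
        in (p, c) \<in> Ori \<and> (s, c) \<in> Ori \<or> (c, p) \<in> Ori \<and> (c, s) \<in> Ori"
      using i n Ori_G[OF _ g] by (auto simp: Let_def)
  qed
  show ?thesis using cl' al by blast
qed

lemma act_AC: assumes g: "g \<in> G" and C: "C \<in> AC" shows "cyc_act g C \<in> AC"
proof -
  obtain vs where vs: "C = cycle_edges vs" "gc vs" using C AC_iff by blast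
  have "cyc_act g C = cycle_edges (map g vs)" using vs cyc_act_edges by simp
  thus ?thesis using gc_map[OF g vs(2)] AC_iff by blast
qed

lemma cverts_act: "cverts (cyc_act g C) = g ` cverts C"
  unfolding cverts_def cyc_act_def by auto

lemma nb_act: assumes g: "g \<in> G" and C: "C \<in> AC" and x: "x \<in> V"
  shows "nb (cyc_act g C) (g x) = g ` nb C x"
proof (intro Set.set_eqI iffI)
  fix y assume "y \<in> nb (cyc_act g C) (g x)"
  hence "{g x, y} \<in> (\<lambda>e. g ` e) ` C" by (simp add: nb_def cyc_act_def)
  then obtain e where e: "e \<in> C" "{g x, y} = g ` e" by blast
  obtain p q where pq: "e = {p,q}" "p \<in> V" "q \<in> V" using AC_edge[OF C e(1)] by blast
  have inj: "inj_on g V" using G_inj[OF g] .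
  have "{g x, y} = {g p, g q}" using e pq by simp
  hence "(g p = g x \<and> g q = y) \<or> (g q = g x \<and> g p = y)" by (simp add: doubleton_eq_iff) metis
  moreover have "g p = g x \<Longrightarrow> p = x" by (meson inj inj_onD pq(2) x)
  moreover have "g q = g x \<Longrightarrow> q = x" by (meson inj inj_onD pq(3) x)
  ultimately have "(p = x \<and> g q = y) \<or> (q = x \<and> g p = y)" by blast
  moreover have "{x, q} \<in> C \<Longrightarrow> q \<in> nb C x" "{x, p} \<in> C \<Longrightarrow> p \<in> nb C x" by (simp_all add: nb_def)
  moreover have "{p,q} \<in> C" "{q,p} \<in> C" using e pq by (simp_all add: insert_commute)
  ultimately show "y \<in> g ` nb C x" by blast
next
  fix y assume "y \<in> g ` nb C x"
  then obtain z where z: "{x,z} \<in> C" "y = g z" by (auto simp: nb_def)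
  hence "g ` {x,z} \<in> cyc_act g C" unfolding cyc_act_def by blast
  thus "y \<in> nb (cyc_act g C) (g x)" using z by (simp add: nb_def)
qed

lemma nb_ne: "x \<in> cverts C \<Longrightarrow> C \<in> AC \<Longrightarrow> \<exists>y. y \<in> nb C x"
proof -
  assume x: "x \<in> cverts C" and C: "C \<in> AC"
  then obtain e where e: "e \<in> C" "x \<in> e" unfolding cverts_def by blast
  then obtain p q where "e = {p,q}" using AC_edge[OF C] by blast
  thus ?thesis using e unfolding nb_def by (auto simp: insert_commute)
qed

lemma adj_types: assumes C: "C \<in> AC" and x: "x \<in> cverts C" and y: "y \<in> nb C x"
  shows "nb C x = inn x \<longleftrightarrow> nb C y = out y"
proof -
  have yC: "y \<in> cverts C" and xy: "x \<in> nb C y" using y nb_cverts unfolding nb_def by (auto simp: insert_commute)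
  show ?thesis
  proof
    assume a: "nb C x = inn x"
    hence "(y,x) \<in> Ori" using y by (simp add: inn_def)
    hence "x \<notin> inn y" using Ori_asym by (auto simp: inn_def)
    thus "nb C y = out y" using nb_cases[OF C yC] xy by auto
  next
    assume a: "nb C y = out y"
    hence "(y,x) \<in> Ori" using xy by (simp add: out_def)
    hence "y \<notin> out x" using Ori_asym by (auto simp: out_def)
    thus "nb C x = inn x" using nb_cases[OF C x] y by auto
  qed
qed

lemma both_types: "C \<in> AC \<Longrightarrow> \<exists>h t. h \<in> cverts C \<and> t \<in> cverts C \<and> nb C h = inn h \<and> nb C t = out t"
proof -
  assume C: "C \<in> AC"
  then obtain vs where "C = cycle_edges vs" "gc vs" using AC_iff by blast
  hence "cyc vs 0 \<in> cverts C" using cverts_cyc by blast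
  then obtain x where x: "x \<in> cverts C" by blast
  then obtain y where y: "y \<in> nb C x" using nb_ne C by blast
  have yC: "y \<in> cverts C" using y nb_cverts by blast
  show ?thesis
  proof (cases "nb C x = inn x")
    case True
    hence "nb C y = out y" using adj_types[OF C x y] by blast
    thus ?thesis using True x yC by blast
  next
    case False
    hence "nb C x = out x" using nb_cases[OF C x] by blast
    moreover have "nb C y = inn y"
      using adj_types[OF C x y] nb_cases[OF C yC] False by blast
    ultimately show ?thesis using x yC by blast
  qed
qed

lemma card_act: "g \<in> G \<Longrightarrow> C \<in> AC \<Longrightarrow> card (cverts (cyc_act g C)) = card (cverts C)"
proof -
  assume g: "g \<in> G" and C: "C \<in> AC"
  show ?thesis unfolding cverts_act using card_G[OF g cverts_V[OF C]] .
qed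

lemma ex_in: assumes x: "x \<in> V" shows "\<exists>C\<in>AC. x \<in> cverts C \<and> nb C x = inn x"
proof -
  obtain C0 where C0: "C0 \<in> AC" using AC_nonempty by blast
  then obtain h where h: "h \<in> cverts C0" "nb C0 h = inn h" using both_types by blast
  have hV: "h \<in> V" using h cverts_V C0 by blast
  obtain g where g: "g \<in> G" "g h = x" using vtrans[OF hV x] by blast
  have "nb (cyc_act g C0) (g h) = g ` nb C0 h" using nb_act[OF g(1) C0 hV] .
  also have "\<dots> = inn (g h)" using inn_G[OF g(1) hV] h(2) by simp
  finally have "nb (cyc_act g C0) x = inn x" using g(2) by simp
  moreover have "x \<in> cverts (cyc_act g C0)" unfolding cverts_act using g(2) h(1) by blast
  ultimately show ?thesis using act_AC[OF g(1) C0] by blast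
qed

lemma ex_out: assumes x: "x \<in> V" shows "\<exists>C\<in>AC. x \<in> cverts C \<and> nb C x = out x"
proof -
  obtain C0 where C0: "C0 \<in> AC" using AC_nonempty by blast
  then obtain h where h: "h \<in> cverts C0" "nb C0 h = out h" using both_types by blast
  have hV: "h \<in> V" using h cverts_V C0 by blast
  obtain g where g: "g \<in> G" "g h = x" using vtrans[OF hV x] by blast
  have "nb (cyc_act g C0) (g h) = g ` nb C0 h" using nb_act[OF g(1) C0 hV] .
  also have "\<dots> = out (g h)" using out_G[OF g(1) hV] h(2) by simp
  finally have "nb (cyc_act g C0) x = out x" using g(2) by simp
  moreover have "x \<in> cverts (cyc_act g C0)" unfolding cverts_act using g(2) h(1) by blast
  ultimately show ?thesis using act_AC[OF g(1) C0] by blast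
qed

definition incyc where "incyc x = (THE C. C \<in> AC \<and> x \<in> cverts C \<and> nb C x = inn x)"
definition outcyc where "outcyc x = (THE C. C \<in> AC \<and> x \<in> cverts C \<and> nb C x = out x)"

lemma incyc: "x \<in> V \<Longrightarrow> incyc x \<in> AC \<and> x \<in> cverts (incyc x) \<and> nb (incyc x) x = inn x"
proof -
  assume x: "x \<in> V"
  obtain C where C: "C\<in>AC" "x \<in> cverts C" "nb C x = inn x" using ex_in[OF x] by blast
  have u: "D = C" if D: "D \<in> AC \<and> x \<in> cverts D \<and> nb D x = inn x" for D
  proof -
    have "nb D x = nb C x" using D C(3) by simp
    thus ?thesis using AC_eq[of D C x] D C(1,2) by blast
  qed
  have "\<exists>!C. C \<in> AC \<and> x \<in> cverts C \<and> nb C x = inn x"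
  proof (rule ex1I[of _ C])
    show "C \<in> AC \<and> x \<in> cverts C \<and> nb C x = inn x" using C by blast
    fix D assume "D \<in> AC \<and> x \<in> cverts D \<and> nb D x = inn x"
    thus "D = C" by (rule u)
  qed
  thus ?thesis unfolding incyc_def by (rule theI')
qed

lemma outcyc: "x \<in> V \<Longrightarrow> outcyc x \<in> AC \<and> x \<in> cverts (outcyc x) \<and> nb (outcyc x) x = out x"
proof -
  assume x: "x \<in> V"
  obtain C where C: "C\<in>AC" "x \<in> cverts C" "nb C x = out x" using ex_out[OF x] by blast
  have u: "D = C" if D: "D \<in> AC \<and> x \<in> cverts D \<and> nb D x = out x" for D
  proof -
    have "nb D x = nb C x" using D C(3) by simp
    thus ?thesis using AC_eq[of D C x] D C(1,2) by blast
  qed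
  have "\<exists>!C. C \<in> AC \<and> x \<in> cverts C \<and> nb C x = out x"
  proof (rule ex1I[of _ C])
    show "C \<in> AC \<and> x \<in> cverts C \<and> nb C x = out x" using C by blast
    fix D assume "D \<in> AC \<and> x \<in> cverts D \<and> nb D x = out x"
    thus "D = C" by (rule u)
  qed
  thus ?thesis unfolding outcyc_def by (rule theI')
qed

lemma inn_ne_out: assumes x: "x \<in> V" shows "inn x \<noteq> out x"
proof
  assume "inn x = out x"
  hence "inn x = {}" using inn_out_disj[of x] by simp
  thus False using deg2[OF x] by simp
qed

lemma in_ne_outcyc: assumes x: "x \<in> V" shows "incyc x \<noteq> outcyc x"
proof
  assume "incyc x = outcyc x"
  hence "inn x = out x" using incyc[OF x] outcyc[OF x] by simp
  thus False using inn_ne_out[OF x] by simp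
qed

lemma incyc_eq: assumes C: "C \<in> AC" "x \<in> cverts C" "nb C x = inn x" shows "C = incyc x"
proof -
  have x: "x \<in> V" using C cverts_V by blast
  show ?thesis using AC_eq[of C "incyc x" x] incyc[OF x] C by simp
qed
lemma outcyc_eq: assumes C: "C \<in> AC" "x \<in> cverts C" "nb C x = out x" shows "C = outcyc x"
proof -
  have x: "x \<in> V" using C cverts_V by blast
  show ?thesis using AC_eq[of C "outcyc x" x] outcyc[OF x] C by simp
qed

lemma cyc_at: assumes C: "C \<in> AC" "x \<in> cverts C" shows "C = incyc x \<or> C = outcyc x"
  using nb_cases[OF C] incyc_eq[OF C] outcyc_eq[OF C] by blast

lemma incyc_act: assumes g: "g \<in> G" and x: "x \<in> V" shows "cyc_act g (incyc x) = incyc (g x)"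
proof -
  have c: "incyc x \<in> AC" "x \<in> cverts (incyc x)" "nb (incyc x) x = inn x" using incyc[OF x] by blast+
  have "nb (cyc_act g (incyc x)) (g x) = g ` nb (incyc x) x" using nb_act[OF g c(1) x] .
  hence "nb (cyc_act g (incyc x)) (g x) = inn (g x)" using inn_G[OF g x] c(3) by simp
  moreover have "g x \<in> cverts (cyc_act g (incyc x))" unfolding cverts_act using c(2) by blast
  ultimately show ?thesis using incyc_eq[OF act_AC[OF g c(1)]] by blast
qed
lemma outcyc_act: assumes g: "g \<in> G" and x: "x \<in> V" shows "cyc_act g (outcyc x) = outcyc (g x)"
proof -
  have c: "outcyc x \<in> AC" "x \<in> cverts (outcyc x)" "nb (outcyc x) x = out x" using outcyc[OF x] by blast+
  have "nb (cyc_act g (outcyc x)) (g x) = g ` nb (outcyc x) x" using nb_act[OF g c(1) x] .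
  hence "nb (cyc_act g (outcyc x)) (g x) = out (g x)" using out_G[OF g x] c(3) by simp
  moreover have "g x \<in> cverts (cyc_act g (outcyc x))" unfolding cverts_act using c(2) by blast
  ultimately show ?thesis using outcyc_eq[OF act_AC[OF g c(1)]] by blast
qed

lemma adj_at: assumes a: "alt_adj V E G C D" and x: "x \<in> cverts C" "x \<in> cverts D"
  shows "(C = incyc x \<and> D = outcyc x) \<or> (C = outcyc x \<and> D = incyc x)"
proof -
  have "C \<in> AC" "D \<in> AC" "C \<noteq> D" using a unfolding alt_adj_def by blast+
  thus ?thesis using cyc_at[of C x] cyc_at[of D x] x by blast
qed

end

context hat begin

lemma V_ne: "\<exists>x. x \<in> V"
proof -
  obtain C where C: "C \<in> AC" using AC_nonempty by blast
  then obtain h t where "h \<in> cverts C" using both_types by blast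
  thus ?thesis using cverts_V[OF C] by blast
qed

lemma act_vtrans: "vertex_transitive (cyc_act ` G) AC"
  unfolding vertex_transitive_def
proof (intro ballI)
  fix C D assume C: "C \<in> AC" and D: "D \<in> AC"
  obtain x where x: "x \<in> cverts C" "nb C x = inn x" using both_types[OF C] by blast
  obtain y where y: "y \<in> cverts D" "nb D y = inn y" using both_types[OF D] by blast
  have xv: "x \<in> V" and yv: "y \<in> V" using x y cverts_V C D by blast+
  obtain g where g: "g \<in> G" "g x = y" using vtrans[OF xv yv] by blast
  have "C = incyc x" "D = incyc y" using incyc_eq C D x y by blast+
  hence "cyc_act g C = D" using incyc_act[OF g(1) xv] g(2) by simp
  thus "\<exists>h\<in>cyc_act ` G. h C = D" using g(1) by blast
qed

lemma adj_pair: assumes a: "alt_adj V E G C D"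
  shows "\<exists>x\<in>V. {C, D} = {incyc x, outcyc x}"
proof -
  have C: "C \<in> AC" and "cverts C \<inter> cverts D \<noteq> {}" using a unfolding alt_adj_def by blast+
  then obtain x where x: "x \<in> cverts C" "x \<in> cverts D" by blast
  have "x \<in> V" using x C cverts_V by blast
  thus ?thesis using adj_at[OF a x] by blast
qed

lemma pair_adj: assumes x: "x \<in> V" shows "alt_adj V E G (incyc x) (outcyc x)"
  unfolding alt_adj_def using incyc[OF x] outcyc[OF x] in_ne_outcyc[OF x] by blast

lemma act_pair: "g \<in> G \<Longrightarrow> x \<in> V \<Longrightarrow> cyc_act g ` {incyc x, outcyc x} = {incyc (g x), outcyc (g x)}"
  using incyc_act outcyc_act by simp

lemma pair_trans: assumes x: "x \<in> V" and a: "alt_adj V E G C D"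
  shows "\<exists>g\<in>G. cyc_act g ` {incyc x, outcyc x} = {C, D}"
proof -
  obtain y where y: "y \<in> V" "{C, D} = {incyc y, outcyc y}" using adj_pair[OF a] by blast
  obtain g where g: "g \<in> G" "g x = y" using vtrans[OF x y(1)] by blast
  show ?thesis using act_pair[OF g(1) x] g y by auto
qed

lemma act_etrans: "edge_transitive (cyc_act ` G) AC (alt_adj V E G)"
  unfolding edge_transitive_def
proof (intro ballI)
  fix e f assume e: "e \<in> edges AC (alt_adj V E G)" and f: "f \<in> edges AC (alt_adj V E G)"
  obtain C D where CD: "e = {C, D}" "alt_adj V E G C D" using e unfolding edges_def by blast
  obtain C' D' where CD': "f = {C', D'}" "alt_adj V E G C' D'" using f unfolding edges_def by blast
  obtain x where x: "x \<in> V" "{C, D} = {incyc x, outcyc x}" using adj_pair[OF CD(2)] by blast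
  obtain g where g: "g \<in> G" "cyc_act g ` {incyc x, outcyc x} = {C', D'}" using pair_trans[OF x(1) CD'(2)] by blast
  show "\<exists>h\<in>cyc_act ` G. h ` e = f" using g x CD CD' by auto
qed

definition K where "K x = card (cverts (incyc x) \<inter> cverts (outcyc x))"

lemma cverts_act_int: assumes g: "g \<in> G" and C: "C \<in> AC" and D: "D \<in> AC"
  shows "cverts (cyc_act g C) \<inter> cverts (cyc_act g D) = g ` (cverts C \<inter> cverts D)"
proof -
  have "g ` (cverts C \<inter> cverts D) = g ` cverts C \<inter> g ` cverts D"
    using inj_on_image_Int[OF G_inj[OF g] cverts_V[OF C] cverts_V[OF D]] .
  thus ?thesis unfolding cverts_act by simp
qed

lemma card_pair: assumes x: "x \<in> V" and a: "alt_adj V E G C D"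
  shows "card (cverts C \<inter> cverts D) = K x"
proof -
  obtain g where g: "g \<in> G" "cyc_act g ` {incyc x, outcyc x} = {C, D}" using pair_trans[OF x a] by blast
  have "{cyc_act g (incyc x), cyc_act g (outcyc x)} = {C, D}" using g(2) by simp
  hence "cverts C \<inter> cverts D = cverts (cyc_act g (incyc x)) \<inter> cverts (cyc_act g (outcyc x))"
    by (auto simp: doubleton_eq_iff)
  also have "\<dots> = g ` (cverts (incyc x) \<inter> cverts (outcyc x))"
    using cverts_act_int[OF g(1)] incyc[OF x] outcyc[OF x] by blast
  finally have "card (cverts C \<inter> cverts D) = card (g ` (cverts (incyc x) \<inter> cverts (outcyc x)))" by simp
  also have "\<dots> = K x" unfolding K_def using card_G[OF g(1)] cverts_V incyc[OF x] by blast
  finally show ?thesis .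
qed

lemma att_eq: assumes x: "x \<in> V" shows "att V E G = K x"
proof -
  define Q where "Q = (\<lambda>(C, D). C \<in> AC \<and> D \<in> AC \<and> C \<noteq> D \<and> cverts C \<inter> cverts D \<noteq> {})"
  have P: "Q (incyc x, outcyc x)"
    using pair_adj[OF x] unfolding alt_adj_def Q_def by simp
  have "Q (Eps Q)" using someI[of Q, OF P] .
  moreover obtain C D where pCD: "Eps Q = (C, D)" by (cases "Eps Q") auto
  ultimately have "alt_adj V E G C D" unfolding alt_adj_def Q_def by simp
  hence "card (cverts C \<inter> cverts D) = K x" by (rule card_pair[OF x])
  moreover have "att V E G = card (cverts (fst (Eps Q)) \<inter> cverts (snd (Eps Q)))"
    unfolding att_def Q_def Let_def by simp
  ultimately show ?thesis using pCD by simp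
qed

end

context hat begin

lemma tp_step: assumes g: "gc vs"
  shows "nb (cycle_edges vs) (cyc vs (j+1)) = inn (cyc vs (j+1)) \<longleftrightarrow>
         \<not> nb (cycle_edges vs) (cyc vs j) = inn (cyc vs j)"
proof -
  let ?C = "cycle_edges vs" let ?x = "cyc vs j" let ?y = "cyc vs (j+1)"
  have C: "?C \<in> AC" using g AC_iff by blast
  have x: "?x \<in> cverts ?C" using cverts_cyc[OF g] by blast
  have y: "?y \<in> nb ?C ?x" using nb_cyc[OF g, of j] by simp
  have yC: "?y \<in> cverts ?C" using cverts_cyc[OF g] by blast
  have yv: "?y \<in> V" using cyc_V g by blast
  have "nb ?C ?x = inn ?x \<longleftrightarrow> nb ?C ?y = out ?y" by (rule adj_types[OF C x y])
  moreover have "nb ?C ?y = out ?y \<longleftrightarrow> \<not> nb ?C ?y = inn ?y"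
    using nb_cases[OF C yC] inn_ne_out[OF yv] by metis
  ultimately show ?thesis by blast
qed

lemma tp_nat: assumes g: "gc vs"
  shows "nb (cycle_edges vs) (cyc vs (j + int k)) = inn (cyc vs (j + int k)) \<longleftrightarrow>
         (nb (cycle_edges vs) (cyc vs j) = inn (cyc vs j) \<longleftrightarrow> even k)"
proof (induction k)
  case 0 thus ?case by simp
next
  case (Suc k)
  have eq: "j + int (Suc k) = j + int k + 1" by simp
  show ?case unfolding eq using tp_step[OF g, of "j + int k"] Suc by simp
qed

lemma len_even: assumes g: "gc vs" shows "even (length vs)"
proof -
  have e: "cyc vs (0 + int (length vs)) = cyc vs 0" using cyc_per1[of vs 0] by simp
  have "nb (cycle_edges vs) (cyc vs (0 + int (length vs))) = inn (cyc vs (0 + int (length vs))) \<longleftrightarrow>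
         (nb (cycle_edges vs) (cyc vs 0) = inn (cyc vs 0) \<longleftrightarrow> even (length vs))"
    by (rule tp_nat[OF g])
  thus ?thesis unfolding e by blast
qed

lemma tp_int: assumes g: "gc vs"
  shows "nb (cycle_edges vs) (cyc vs j) = inn (cyc vs j) \<longleftrightarrow>
         (nb (cycle_edges vs) (cyc vs 0) = inn (cyc vs 0) \<longleftrightarrow> even j)"
proof -
  let ?n = "int (length vs)"
  have n: "0 < length vs" using g cl by blast
  have ev: "even ?n" using len_even[OF g] by simp
  define k where "k = nat (j mod ?n)"
  have jk: "0 + int k = j mod ?n" using n by (simp add: k_def)
  have "cyc vs (0 + int k) = cyc vs j" using jk cyc_mod by simp
  moreover have "even (int k) \<longleftrightarrow> even j"
  proof -
    have "(j mod ?n) mod 2 = j mod 2" using ev by (simp add: mod_mod_cancel)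
    thus ?thesis using jk by (metis add_0 even_iff_mod_2_eq_zero)
  qed
  ultimately show ?thesis using tp_nat[OF g, of 0 k] by simp
qed

lemma card_edges: assumes g: "gc vs" shows "card (cycle_edges vs) = length vs"
proof -
  let ?n = "length vs"
  have l: "3 \<le> ?n" "distinct vs" using g cl by blast+
  have inj: "inj_on (\<lambda>i. {vs!i, vs!((i+1) mod ?n)}) {..<?n}"
  proof (rule inj_onI)
    fix i j assume i: "i \<in> {..<?n}" and j: "j \<in> {..<?n}"
      and eq: "{vs!i, vs!((i+1) mod ?n)} = {vs!j, vs!((j+1) mod ?n)}"
    have n0: "0 < ?n" using l(1) by linarith
    have ii: "i < ?n" "(i+1) mod ?n < ?n" "j < ?n" "(j+1) mod ?n < ?n" using i j n0 by auto
    have inj': "a < ?n \<Longrightarrow> b < ?n \<Longrightarrow> vs!a = vs!b \<Longrightarrow> a = b" for a b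
      using l(2) nth_eq_iff_index_eq by blast
    show "i = j"
    proof (cases "vs!i = vs!j")
      case True thus ?thesis using inj' ii by blast
    next
      case False
      have "(vs!i = vs!j \<and> vs!((i+1) mod ?n) = vs!((j+1) mod ?n)) \<or>
            (vs!i = vs!((j+1) mod ?n) \<and> vs!((i+1) mod ?n) = vs!j)" using eq by (simp only: doubleton_eq_iff)
      hence "vs!i = vs!((j+1) mod ?n)" "vs!((i+1) mod ?n) = vs!j" using False by blast+
      hence a: "i = (j+1) mod ?n" "(i+1) mod ?n = j" using inj' ii by blast+
      show ?thesis
      proof (cases "j + 1 < ?n")
        case True
        hence "i = j + 1" using a(1) by simp
        hence a2: "(j+2) mod ?n = j" using a(2) by (simp add: add.assoc)
        show ?thesis
        proof (cases "j + 2 < ?n")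
          case True thus ?thesis using a2 by simp
        next
          case False
          hence "j + 2 = ?n" using \<open>j + 1 < ?n\<close> by simp
          hence "j = 0" using a2 by simp
          thus ?thesis using \<open>j + 2 = ?n\<close> l(1) by simp
        qed
      next
        case False
        hence "j + 1 = ?n" using ii by simp
        hence "i = 0" using a by simp
        hence "1 mod ?n = j" using a by simp
        hence "j = 1" using l by simp
        thus ?thesis using \<open>j + 1 = ?n\<close> l by simp
      qed
    qed
  qed
  show ?thesis unfolding ce_img using card_image[OF inj] by simp
qed

lemma card_cverts_len: "gc vs \<Longrightarrow> card (cverts (cycle_edges vs)) = length vs"
  using cverts_set cl distinct_card by metis

lemma card_AC: assumes C: "C \<in> AC" shows "card C = card (cverts C) \<and> even (card (cverts C))"
proof -
  obtain vs where vs: "C = cycle_edges vs" "gc vs" using C AC_iff by blast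
  thus ?thesis using card_edges card_cverts_len len_even by simp
qed

lemma card_cverts_same: assumes C: "C \<in> AC" and D: "D \<in> AC" shows "card (cverts C) = card (cverts D)"
proof -
  obtain h where h: "h \<in> cyc_act ` G" "h C = D" using act_vtrans C D unfolding vertex_transitive_def by blast
  then obtain g where "g \<in> G" "cyc_act g C = D" by blast
  thus ?thesis using card_act C by metis
qed

lemma rad_eq: assumes C: "C \<in> AC" shows "2 * rad V E G = card (cverts C)"
proof -
  have C0: "(SOME C. C \<in> AC) \<in> AC" using AC_nonempty some_in_eq by blast
  have "rad V E G = card (cverts (SOME C. C \<in> AC)) div 2" unfolding rad_def using card_AC[OF C0] by simp
  moreover have "even (card (cverts (SOME C. C \<in> AC)))" using card_AC[OF C0] by simp
  ultimately show ?thesis using card_cverts_same[OF C0 C] by simp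
qed

lemma valence: assumes C: "C \<in> AC" and x0: "x0 \<in> V"
  shows "K x0 * card {D. alt_adj V E G C D} = card (cverts C)"
proof -
  let ?N = "{D. alt_adj V E G C D}"
  let ?f = "\<lambda>D. cverts C \<inter> cverts D"
  have "?N \<subseteq> AC" unfolding alt_adj_def by blast
  hence finN: "finite ?N" using finite_subset finAC by blast
  have uniq: "D1 = D2" if d: "D1 \<in> ?N" "D2 \<in> ?N" "x \<in> ?f D1" "x \<in> ?f D2" for D1 D2 x
  proof -
    have a1: "alt_adj V E G C D1" and a2: "alt_adj V E G C D2" using d(1,2) by simp_all
    have x1: "x \<in> cverts C" "x \<in> cverts D1" using d(3) by simp_all
    have x2: "x \<in> cverts C" "x \<in> cverts D2" using d(4) by simp_all
    have xv: "x \<in> V" using x1 C cverts_V by blast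
    have h1: "(C = incyc x \<and> D1 = outcyc x) \<or> (C = outcyc x \<and> D1 = incyc x)" by (rule adj_at[OF a1 x1])
    have h2: "(C = incyc x \<and> D2 = outcyc x) \<or> (C = outcyc x \<and> D2 = incyc x)" by (rule adj_at[OF a2 x2])
    have ne: "incyc x \<noteq> outcyc x" by (rule in_ne_outcyc[OF xv])
    show ?thesis
    proof (cases "C = incyc x")
      case True
      hence "C \<noteq> outcyc x" using ne by simp
      thus ?thesis using h1 h2 True by simp
    next
      case False
      thus ?thesis using h1 h2 by simp
    qed
  qed
  have inj: "inj_on ?f ?N"
  proof (rule inj_onI)
    fix D1 D2 assume d: "D1 \<in> ?N" "D2 \<in> ?N" "?f D1 = ?f D2"
    have "?f D1 \<noteq> {}" using d(1) unfolding alt_adj_def by simp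
    then obtain x where x: "x \<in> ?f D1" by blast
    hence "x \<in> ?f D2" using d(3) by simp
    thus "D1 = D2" using uniq[OF d(1) d(2) x] by simp
  qed
  have cover: "\<Union> (?f ` ?N) = cverts C"
  proof
    show "\<Union> (?f ` ?N) \<subseteq> cverts C" by blast
    show "cverts C \<subseteq> \<Union> (?f ` ?N)"
    proof
      fix x assume x: "x \<in> cverts C"
      have xv: "x \<in> V" using x C cverts_V by blast
      have pa: "alt_adj V E G (incyc x) (outcyc x)" by (rule pair_adj[OF xv])
      have xi: "x \<in> cverts (incyc x)" and xo: "x \<in> cverts (outcyc x)" using incyc[OF xv] outcyc[OF xv] by blast+
      have "\<exists>D. alt_adj V E G C D \<and> x \<in> ?f D"
      proof (cases "C = incyc x")
        case True
        hence "alt_adj V E G C (outcyc x)" using pa by simp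
        thus ?thesis using x xo by blast
      next
        case False
        hence "C = outcyc x" using cyc_at[OF C x] by blast
        moreover have "alt_adj V E G (outcyc x) (incyc x)" using pa unfolding alt_adj_def by blast
        ultimately have "alt_adj V E G C (incyc x)" by simp
        thus ?thesis using x xi by blast
      qed
      thus "x \<in> \<Union> (?f ` ?N)" by blast
    qed
  qed
  have a1: "finite (?f ` ?N)" using finN by simp
  have a2: "finite (\<Union> (?f ` ?N))" unfolding cover using finite_subset[OF cverts_V[OF C] finV] .
  have a3: "\<forall>c\<in>?f ` ?N. card c = K x0"
    proof
      fix c assume "c \<in> ?f ` ?N"
      then obtain D where "D \<in> ?N" "c = ?f D" by blast
      thus "card c = K x0" using card_pair[OF x0, of C D] by simp
    qed
  have a4: "\<forall>c1\<in>?f ` ?N. \<forall>c2\<in>?f ` ?N. c1 \<noteq> c2 \<longrightarrow> c1 \<inter> c2 = {}"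
    proof (intro ballI impI)
      fix c1 c2 assume c: "c1 \<in> ?f ` ?N" "c2 \<in> ?f ` ?N" "c1 \<noteq> c2"
      then obtain D1 D2 where d: "D1 \<in> ?N" "c1 = ?f D1" "D2 \<in> ?N" "c2 = ?f D2" by blast
      show "c1 \<inter> c2 = {}"
      proof (rule ccontr)
        assume "c1 \<inter> c2 \<noteq> {}"
        then obtain x where "x \<in> ?f D1" "x \<in> ?f D2" using d by blast
        hence "D1 = D2" using uniq d by blast
        thus False using c d by simp
      qed
    qed
  have "K x0 * card (?f ` ?N) = card (\<Union> (?f ` ?N))"
    by (rule card_partition[OF a1 a2 a3[rule_format] a4[rule_format]])
  thus ?thesis using cover card_image[OF inj] by simp
qed

end

context hat begin

definition "x0 = (SOME x. x \<in> V)"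
lemma x0V: "x0 \<in> V" unfolding x0_def using someI_ex[OF V_ne] .
definition "I0 = incyc x0"
definition "O0 = outcyc x0"
definition "mixed \<longleftrightarrow> (\<exists>w. w \<in> cverts I0 \<and> w \<in> cverts O0 \<and> nb I0 w = out w)"

lemma I0: "I0 \<in> AC" "x0 \<in> cverts I0" "nb I0 x0 = inn x0" using incyc[OF x0V] unfolding I0_def by blast+
lemma O0: "O0 \<in> AC" "x0 \<in> cverts O0" "nb O0 x0 = out x0" using outcyc[OF x0V] unfolding O0_def by blast+
lemma I0_ne_O0: "I0 \<noteq> O0" using in_ne_outcyc[OF x0V] unfolding I0_def O0_def .
lemma adj0: "alt_adj V E G I0 O0" using pair_adj[OF x0V] unfolding I0_def O0_def .

lemma arc_mixed: assumes a: "arc_transitive (cyc_act ` G) AC (alt_adj V E G)" shows mixed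
proof -
  have ar: "(I0, O0) \<in> arcs AC (alt_adj V E G)" "(O0, I0) \<in> arcs AC (alt_adj V E G)"
    using adj0 I0 O0 unfolding arcs_def alt_adj_def by auto
  note a' = a[unfolded arc_transitive_def]
  have "case (I0, O0) of (u, v) \<Rightarrow> \<forall>(x, y)\<in>arcs AC (alt_adj V E G). \<exists>g\<in>cyc_act ` G. g u = x \<and> g v = y"
    by (rule bspec[OF a' ar(1)])
  hence b1: "\<forall>(x, y)\<in>arcs AC (alt_adj V E G). \<exists>g\<in>cyc_act ` G. g I0 = x \<and> g O0 = y" by simp
  have "case (O0, I0) of (x, y) \<Rightarrow> \<exists>g\<in>cyc_act ` G. g I0 = x \<and> g O0 = y"
    by (rule bspec[OF b1 ar(2)])
  hence "\<exists>g\<in>cyc_act ` G. g I0 = O0 \<and> g O0 = I0" by simp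
  then obtain h where h: "h \<in> cyc_act ` G" "h I0 = O0" "h O0 = I0" by blast
  then obtain g where g: "g \<in> G" "cyc_act g I0 = O0" "cyc_act g O0 = I0" by blast
  let ?w = "g x0"
  have "?w \<in> cverts (cyc_act g O0)" unfolding cverts_act using O0(2) by blast
  hence wI: "?w \<in> cverts I0" using g(3) by simp
  have "?w \<in> cverts (cyc_act g I0)" unfolding cverts_act using I0(2) by blast
  hence wO: "?w \<in> cverts O0" using g(2) by simp
  have "I0 = outcyc ?w" using g(3) outcyc_act[OF g(1) x0V] unfolding O0_def by simp
  hence "nb I0 ?w = out ?w" using outcyc[OF G_V[OF g(1) x0V]] by simp
  thus ?thesis unfolding mixed_def using wI wO by blast
qed

lemma good_pt: assumes m: mixed and a: "alt_adj V E G C D"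
  shows "\<exists>y\<in>V. C = incyc y \<and> D = outcyc y"
proof -
  obtain x where x: "x \<in> V" "{C, D} = {incyc x, outcyc x}" using adj_pair[OF a] by blast
  have CD: "C \<noteq> D" using a unfolding alt_adj_def by blast
  show ?thesis
  proof (cases "C = incyc x")
    case True
    hence "D = outcyc x" using x CD by (auto simp: doubleton_eq_iff)
    thus ?thesis using True x by blast
  next
    case False
    hence C: "C = outcyc x" and D: "D = incyc x" using x CD by (auto simp: doubleton_eq_iff)
    obtain w where w: "w \<in> cverts I0" "w \<in> cverts O0" "nb I0 w = out w" using m unfolding mixed_def by blast
    have wv: "w \<in> V" using w I0 cverts_V by blast
    have Iw: "I0 = outcyc w" using outcyc_eq[OF I0(1) w(1) w(3)] .
    have Ow: "O0 = incyc w" using cyc_at[OF O0(1) w(2)] Iw I0_ne_O0 by blast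
    obtain g where g: "g \<in> G" "g x0 = x" using vtrans[OF x0V x(1)] by blast
    have e1: "cyc_act g I0 = D" using incyc_act[OF g(1) x0V] g(2) D unfolding I0_def by simp
    have e2: "cyc_act g I0 = outcyc (g w)" using outcyc_act[OF g(1) wv] Iw by simp
    have e3: "cyc_act g O0 = C" using outcyc_act[OF g(1) x0V] g(2) C unfolding O0_def by simp
    have e4: "cyc_act g O0 = incyc (g w)" using incyc_act[OF g(1) wv] Ow by simp
    have "C = incyc (g w) \<and> D = outcyc (g w)" using e1 e2 e3 e4 by simp
    thus ?thesis using G_V[OF g(1) wv] by blast
  qed
qed

lemma mixed_key: assumes m: mixed and a: "alt_adj V E G C D" and b: "alt_adj V E G C' D'"
  shows "\<exists>h\<in>cyc_act ` G. h C = C' \<and> h D = D'"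
proof -
  obtain y where y: "y \<in> V" "C = incyc y" "D = outcyc y" using good_pt[OF m a] by blast
  obtain y' where y': "y' \<in> V" "C' = incyc y'" "D' = outcyc y'" using good_pt[OF m b] by blast
  obtain g where g: "g \<in> G" "g y = y'" using vtrans[OF y(1) y'(1)] by blast
  have "cyc_act g C = C'" "cyc_act g D = D'" using incyc_act[OF g(1) y(1)] outcyc_act[OF g(1) y(1)] g y y' by simp_all
  thus ?thesis using g(1) by blast
qed

lemma mixed_arc: assumes m: mixed shows "arc_transitive (cyc_act ` G) AC (alt_adj V E G)"
  unfolding arc_transitive_def arcs_def using mixed_key[OF m] by fastforce

end

context hat begin

definition "vs0 = (SOME vs. I0 = cycle_edges vs \<and> gc vs)"
lemma vs0: "I0 = cycle_edges vs0" "gc vs0"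
proof -
  have "\<exists>vs. I0 = cycle_edges vs \<and> gc vs" using I0(1) AC_iff by blast
  hence "I0 = cycle_edges vs0 \<and> gc vs0" unfolding vs0_def by (rule someI_ex)
  thus "I0 = cycle_edges vs0" "gc vs0" by blast+
qed

abbreviation "c \<equiv> cyc vs0"
definition "Tset = cverts I0 \<inter> cverts O0"
definition "S = {j. c j \<in> Tset}"

lemma c_V: "c j \<in> V" using cyc_V vs0(2) by blast
lemma cverts_I0: "cverts I0 = range c" using cverts_cyc[OF vs0(2)] vs0(1) by simp
lemma c_I0: "c j \<in> cverts I0" using cverts_I0 by simp
lemma nb_I0: "nb I0 (c j) = {c (j-1), c (j+1)}" using nb_cyc[OF vs0(2)] vs0(1) by simp
lemma c_ne: "c (j-1) \<noteq> c (j+1)" using cyc_ne[OF vs0(2)] by blast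

lemma refl_elem: assumes j: "j \<in> S"
  shows "\<exists>h\<in>G. h (c j) = c j \<and> h (c (j-1)) = c (j+1) \<and> h (c (j+1)) = c (j-1)"
proof -
  let ?y = "c j" let ?a = "c (j-1)" let ?b = "c (j+1)"
  have yv: "?y \<in> V" by (rule c_V)
  have av: "?a \<in> V" and bv: "?b \<in> V" by (rule c_V)+
  have ab: "?a \<noteq> ?b" by (rule c_ne)
  have nbI: "nb I0 ?y = {?a, ?b}" by (rule nb_I0)
  show ?thesis
  proof (cases "nb I0 ?y = inn ?y")
    case True
    have e: "inn ?y = {?a, ?b}" using True nbI by simp
    have "?a \<in> inn ?y" "?b \<in> inn ?y" unfolding e by simp_all
    hence ia: "(?a, ?y) \<in> Ori" and ib: "(?b, ?y) \<in> Ori" unfolding inn_def by simp_all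
    obtain h where h: "h \<in> G" "h ?a = ?b" "h ?y = ?y" using Ori_trans[OF ia ib] by blast
    have "?b \<in> inn ?y" using ib unfolding inn_def by simp
    hence "h ?b \<in> h ` inn ?y" by (rule imageI)
    hence "h ?b \<in> inn ?y" using inn_G[OF h(1) yv] h(3) by simp
    hence "h ?b \<in> {?a, ?b}" using True nbI by simp
    moreover have "h ?b \<noteq> h ?a"
    proof
      assume "h ?b = h ?a"
      hence "?b = ?a" using inj_onD[OF G_inj[OF h(1)] _ bv av] by blast
      thus False using ab by simp
    qed
    ultimately have "h ?b = ?a" using h(2) by auto
    thus ?thesis using h by blast
  next
    case False
    hence "nb I0 ?y = out ?y" using nb_cases[OF I0(1) c_I0] by blast
    hence e: "out ?y = {?a, ?b}" using nbI by simp
    have "?a \<in> out ?y" "?b \<in> out ?y" unfolding e by simp_all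
    hence ia: "(?y, ?a) \<in> Ori" and ib: "(?y, ?b) \<in> Ori" unfolding out_def by simp_all
    obtain h where h: "h \<in> G" "h ?y = ?y" "h ?a = ?b" using Ori_trans[OF ia ib] by blast
    have "?b \<in> out ?y" using ib unfolding out_def by simp
    hence "h ?b \<in> h ` out ?y" by (rule imageI)
    hence "h ?b \<in> out ?y" using out_G[OF h(1) yv] h(2) by simp
    hence "h ?b \<in> {?a, ?b}" using \<open>nb I0 ?y = out ?y\<close> nbI by simp
    moreover have "h ?b \<noteq> h ?a"
    proof
      assume "h ?b = h ?a"
      hence "?b = ?a" using inj_onD[OF G_inj[OF h(1)] _ bv av] by blast
      thus False using ab by simp
    qed
    ultimately have "h ?b = ?a" using h(3) by auto
    thus ?thesis using h by blast
  qed
qed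

lemma fixes_I0_O0: assumes h: "h \<in> G" and y: "y \<in> Tset" and hy: "h y = y"
  shows "cyc_act h I0 = I0" "cyc_act h O0 = O0"
proof -
  have yI: "y \<in> cverts I0" "y \<in> cverts O0" using y unfolding Tset_def by simp_all
  have yv: "y \<in> V" using subsetD[OF cverts_V[OF I0(1)] yI(1)] .
  have fi: "cyc_act h (incyc y) = incyc y" using incyc_act[OF h yv] hy by simp
  have fo: "cyc_act h (outcyc y) = outcyc y" using outcyc_act[OF h yv] hy by simp
  show "cyc_act h I0 = I0" using cyc_at[OF I0(1) yI(1)] fi fo by auto
  show "cyc_act h O0 = O0" using cyc_at[OF O0(1) yI(2)] fi fo by auto
qed

lemma refl_nat: assumes h: "h \<in> G" and hI: "cyc_act h I0 = I0" and h0: "h (c i) = c i"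
  and h1: "h (c (i+1)) = c (i-1)"
  shows "h (c (i + int k)) = c (i - int k) \<and> h (c (i + int k + 1)) = c (i - int k - 1)"
proof (induction k)
  case 0 thus ?case using h0 h1 by simp
next
  case (Suc k)
  let ?p = "i + int k + 1"
  have e1: "h (c (?p - 1)) = c (i - int k)" using Suc by simp
  have e2: "h (c ?p) = c (i - int k - 1)" using Suc by simp
  have n: "0 < length vs0" using vs0(2) cl by blast
  have "I0 = range (\<lambda>j. {c j, c (j+1)})" using vs0(1) cycle_edges_cyc[OF n] by simp
  moreover have "{c ?p, c (?p + 1)} \<in> range (\<lambda>j. {c j, c (j+1)})" by (rule rangeI)
  ultimately have "{c ?p, c (?p + 1)} \<in> I0" by simp
  hence "h ` {c ?p, c (?p + 1)} \<in> cyc_act h I0" unfolding cyc_act_def by blast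
  hence "{h (c ?p), h (c (?p+1))} \<in> I0" using hI by simp
  hence "h (c (?p+1)) \<in> nb I0 (c (i - int k - 1))" using e2 unfolding nb_def by simp
  hence m: "h (c (?p+1)) \<in> {c (i - int k - 1 - 1), c (i - int k - 1 + 1)}" using nb_I0 by simp
  have "c (?p - 1) \<noteq> c (?p + 1)" by (rule c_ne)
  hence "h (c (?p - 1)) \<noteq> h (c (?p + 1))" using inj_onD[OF G_inj[OF h] _ c_V c_V] by blast
  hence "h (c (?p+1)) \<noteq> c (i - int k)" using e1 by simp
  hence new: "h (c (?p+1)) = c (i - int k - 1 - 1)" using m by auto
  have A: "i + int (Suc k) = ?p" and B: "i - int (Suc k) = i - int k - 1" by simp_all
  show ?case unfolding A B using e2 new by blast
qed

lemma refl_all: assumes h: "h \<in> G" and hI: "cyc_act h I0 = I0" and h0: "h (c i) = c i"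
  and h1: "h (c (i+1)) = c (i-1)"
  shows "h (c j) = c (2*i - j)"
proof -
  let ?n = "int (length vs0)"
  have n: "0 < length vs0" using vs0(2) cl by blast
  define k where "k = nat ((j - i) mod ?n)"
  have k: "int k = (j - i) mod ?n" using n by (simp add: k_def)
  have "(i + int k) mod ?n = j mod ?n" unfolding k by (simp add: mod_add_right_eq)
  hence a: "c (i + int k) = c j" by (metis cyc_mod)
  have "(i - int k) mod ?n = (i - (j - i)) mod ?n" unfolding k by (simp add: mod_diff_right_eq)
  hence b: "c (i - int k) = c (2*i - j)" by (metis cyc_mod mult_2 diff_diff_eq2 add_diff_eq)
  show ?thesis using refl_nat[OF h hI h0 h1, of k] a b by simp
qed

lemma S_closed: assumes i: "i \<in> S" and j: "j \<in> S" shows "2*i - j \<in> S"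
proof -
  obtain h where h: "h \<in> G" "h (c i) = c i" "h (c (i-1)) = c (i+1)" "h (c (i+1)) = c (i-1)"
    using refl_elem[OF i] by blast
  have ci: "c i \<in> Tset" using i unfolding S_def by simp
  have hI: "cyc_act h I0 = I0" and hO: "cyc_act h O0 = O0" using fixes_I0_O0[OF h(1) ci h(2)] by blast+
  have hj: "h (c j) = c (2*i - j)" by (rule refl_all[OF h(1) hI h(2) h(4)])
  have cj: "c j \<in> cverts I0" "c j \<in> cverts O0" using j unfolding S_def Tset_def by simp_all
  have "h (c j) \<in> cverts (cyc_act h I0)" "h (c j) \<in> cverts (cyc_act h O0)"
    unfolding cverts_act using cj by blast+
  hence "c (2*i - j) \<in> Tset" using hI hO hj unfolding Tset_def by simp
  thus ?thesis unfolding S_def by simp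
qed

end



lemma refl_mult:
  fixes T :: "int set"
  assumes z: "0 \<in> T" and cl: "\<And>i j. i \<in> T \<Longrightarrow> j \<in> T \<Longrightarrow> 2*i - j \<in> T" and d: "d \<in> T"
  shows "k * d \<in> T"
proof -
  have pos: "int m * d \<in> T \<and> int (m+1) * d \<in> T" for m :: nat
  proof (induction m)
    case 0 thus ?case using z d by simp
  next
    case (Suc m)
    hence "2 * (int (m+1) * d) - int m * d \<in> T" using cl by blast
    moreover have "2 * (int (m+1) * d) - int m * d = int (Suc m + 1) * d" by (simp add: algebra_simps)
    ultimately show ?case using Suc by simp
  qed
  show ?thesis
  proof (cases "0 \<le> k")
    case True
    define m where "m = nat k"
    have "k = int m" using True by (simp add: m_def)
    thus ?thesis using pos[of m] by simp
  next
    case False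
    define m where "m = nat (- k)"
    have m: "k = - int m" using False by (simp add: m_def)
    have "2 * 0 - int m * d \<in> T" using cl[OF z] pos[of m] by blast
    thus ?thesis using m by simp
  qed
qed

lemma refl_closed:
  fixes S :: "int set" and n s0 :: int
  assumes n: "0 < n" and per: "s0 + n \<in> S" and s0: "s0 \<in> S"
    and cl: "\<And>i j. i \<in> S \<Longrightarrow> j \<in> S \<Longrightarrow> 2*i - j \<in> S"
  shows "\<exists>d>0. d dvd n \<and> S = {j. d dvd (j - s0)}"
proof -
  define T where "T = {j. j + s0 \<in> S}"
  have z: "0 \<in> T" using s0 by (simp add: T_def)
  have nT: "n \<in> T" using per by (simp add: T_def add.commute)
  have clT: "2*i - j \<in> T" if "i \<in> T" "j \<in> T" for i j
  proof -
    have "i + s0 \<in> S" "j + s0 \<in> S" using that by (simp_all add: T_def)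
    hence "2*(i+s0) - (j+s0) \<in> S" by (rule cl)
    moreover have "2*(i+s0) - (j+s0) = (2*i - j) + s0" by simp
    ultimately show ?thesis by (simp add: T_def add.commute)
  qed
  have neg: "- j \<in> T" if "j \<in> T" for j using clT[OF z that] by simp
  have sub2: "y - 2*x \<in> T" if "x \<in> T" "y \<in> T" for x y
    using neg[OF clT[OF that]] by simp
  define P where "P = (\<lambda>m::nat. 0 < m \<and> int m \<in> T)"
  have Pn: "P (nat n)" using n nT by (simp add: P_def)
  define dn where "dn = (LEAST m. P m)"
  have Pd: "P dn" unfolding dn_def by (rule LeastI[of P, OF Pn])
  have minl: "\<not> P m" if "m < dn" for m using not_less_Least[of m P] that unfolding dn_def by blast
  define d where "d = int dn"
  have d0: "0 < d" and dT: "d \<in> T" using Pd by (simp_all add: P_def d_def)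
  have small: "e \<notin> T" if "0 < e" "e < d" for e
  proof
    assume "e \<in> T"
    hence "P (nat e)" using that by (simp add: P_def)
    moreover have "nat e < dn" using that by (simp add: d_def)
    ultimately show False using minl by blast
  qed
  have mult: "k * d \<in> T" for k by (rule refl_mult[OF z clT dT])
  have dvd: "d dvd e" if e: "e \<in> T" for e
  proof -
    define q where "q = e div (2*d)"
    define m where "m = e mod (2*d)"
    have "e = (2*d) * q + m" unfolding q_def m_def by (rule mult_div_mod_eq[symmetric])
    hence em: "e = 2 * (q * d) + m" by (simp add: algebra_simps)
    have "e - 2 * (q * d) \<in> T" using sub2[OF mult[of q] e] .
    moreover have "e - 2 * (q * d) = m" using em by simp
    ultimately have mT: "m \<in> T" by simp
    have m0: "0 \<le> m" "m < 2*d" using d0 unfolding m_def by simp_all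
    have "m = 0 \<or> m = d"
    proof (rule ccontr)
      assume c: "\<not> (m = 0 \<or> m = d)"
      show False
      proof (cases "m < d")
        case True thus False using small[of m] c m0 mT by simp
      next
        case False
        hence "0 < 2*d - m" "2*d - m < d" using c m0 by simp_all
        moreover have "2*d - m \<in> T" using clT[OF dT mT] .
        ultimately show False using small by blast
      qed
    qed
    thus ?thesis using em by auto
  qed
  have "S = {j. d dvd (j - s0)}"
  proof (intro Set.set_eqI iffI)
    fix j assume "j \<in> S"
    hence "j - s0 \<in> T" by (simp add: T_def)
    thus "j \<in> {j. d dvd (j - s0)}" using dvd by simp
  next
    fix j assume "j \<in> {j. d dvd (j - s0)}"
    then obtain k where "j - s0 = d * k" by (auto elim: dvdE)
    hence "j - s0 \<in> T" using mult[of k] by (simp add: mult.commute)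
    thus "j \<in> S" by (simp add: T_def)
  qed
  thus ?thesis using d0 dvd[OF nT] by blast
qed

lemma card_cong:
  fixes d n s :: int
  assumes d: "0 < d" "d dvd n" and n: "0 < n"
  shows "card {j \<in> {0..<n}. d dvd (j - s)} = nat (n div d)"
proof -
  define r where "r = s mod d"
  have r: "0 \<le> r" "r < d" using d by (simp_all add: r_def)
  have eq: "{j \<in> {0..<n}. d dvd (j - s)} = (\<lambda>k. r + d * k) ` {0..<n div d}"
  proof (intro Set.set_eqI iffI)
    fix j assume j: "j \<in> {j \<in> {0..<n}. d dvd (j - s)}"
    hence j1: "d dvd (j - s)" "0 \<le> j" "j < n" by auto
    have "s - r = d * (s div d)" unfolding r_def by (simp add: minus_mod_eq_mult_div)
    hence "d dvd (j - s) + (s - r)" using j1(1) by simp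
    hence "d dvd (j - r)" by simp
    then obtain k where k: "j - r = d * k" by (auto elim: dvdE)
    have "- d < d * k" using k j1 r by linarith
    hence "d * (-1) < d * k" by simp
    hence "-1 < k" using mult_less_cancel_left_pos[OF d(1)] by blast
    hence "0 \<le> k" by simp
    moreover have "k < n div d"
    proof -
      obtain m where m: "n = d * m" using d(2) by (auto elim: dvdE)
      have "d * k < d * m" using k j1(3) r(1) m by linarith
      hence "k < m" using mult_less_cancel_left_pos[OF d(1)] by blast
      moreover have "n div d = m" using m d(1) by simp
      ultimately show ?thesis by simp
    qed
    ultimately have kk: "k \<in> {0..<n div d}" by simp
    have "j = r + d * k" using k by simp
    from kk this show "j \<in> (\<lambda>k. r + d * k) ` {0..<n div d}" by (rule rev_image_eqI)
  next
    fix j assume "j \<in> (\<lambda>k. r + d * k) ` {0..<n div d}"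
    then obtain k where kk: "k \<in> {0..<n div d}" "j = r + d * k" by (rule imageE)
    hence k: "j = r + d * k" "0 \<le> k" "k < n div d" by simp_all
    obtain m where m: "n = d * m" using d(2) by (auto elim: dvdE)
    have "n div d = m" using m d(1) by simp
    hence km: "k + 1 \<le> m" using k(3) by linarith
    have "d * (k + 1) \<le> d * m" using mult_left_mono[OF km, of d] d(1) by simp
    hence "d * k + d \<le> n" using m by (simp add: algebra_simps)
    hence jn: "j < n" using k(1) r(2) by linarith
    have "0 \<le> d * k" using k(2) d(1) by simp
    hence j0: "0 \<le> j" using k(1) r(1) by linarith
    have "d dvd (j - s)"
    proof -
      have "j - s = d * k - (s - s mod d)" using k by (simp add: r_def)
      also have "s - s mod d = d * (s div d)" by (simp add: minus_mod_eq_mult_div)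
      finally have "j - s = d * k - d * (s div d)" .
      also have "\<dots> = d * (k - s div d)" by (simp add: right_diff_distrib)
      finally show ?thesis by simp
    qed
    thus "j \<in> {j \<in> {0..<n}. d dvd (j - s)}" using jn j0 by simp
  qed
  have "inj_on (\<lambda>k. r + d * k) {0..<n div d}" using d(1) by (simp add: inj_on_def)
  hence "card {j \<in> {0..<n}. d dvd (j - s)} = card {0..<n div d}" unfolding eq by (rule card_image)
  thus ?thesis by simp
qed


lemma arith_int:
  fixes n d a :: int
  assumes d: "0 < d" and a: "0 < a" and nda: "n = d * a" and ev: "even n"
  shows "a dvd n div 2 \<longleftrightarrow> even d"
proof
  assume "a dvd n div 2"
  then obtain m where m: "n div 2 = a * m" by (auto elim: dvdE)
  have "n = 2 * (n div 2)" using ev by simp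
  hence "d * a = (2 * m) * a" using m nda by (simp add: algebra_simps)
  hence "d = 2 * m" using a by simp
  thus "even d" by simp
next
  assume "even d"
  then obtain e where e: "d = 2 * e" by (auto elim: evenE)
  have "n div 2 = a * e" using nda e by simp
  thus "a dvd n div 2" by simp
qed

context hat begin

definition "nn = int (length vs0)"

lemma nn_pos: "0 < nn" using vs0(2) cl unfolding nn_def by simp

lemma s0_ex: "\<exists>s0. c s0 = x0 \<and> s0 \<in> S"
proof -
  have "x0 \<in> range c" using I0(2) cverts_I0 by simp
  then obtain s0 where s0: "c s0 = x0" by auto
  have "x0 \<in> Tset" using I0(2) O0(2) unfolding Tset_def by simp
  thus ?thesis using s0 unfolding S_def by auto
qed

definition "s0 = (SOME s. c s = x0 \<and> s \<in> S)"
lemma s0: "c s0 = x0" "s0 \<in> S" using someI_ex[OF s0_ex] unfolding s0_def by blast+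

lemma d_ex: "\<exists>d>0. d dvd nn \<and> S = {j. d dvd (j - s0)}"
proof (rule refl_closed[OF nn_pos])
  show "s0 + nn \<in> S" using s0(2) cyc_per1[of vs0 s0] unfolding S_def nn_def by simp
  show "s0 \<in> S" by (rule s0(2))
  show "\<And>i j. i \<in> S \<Longrightarrow> j \<in> S \<Longrightarrow> 2 * i - j \<in> S" by (rule S_closed)
qed

definition "dd = (SOME d. d > 0 \<and> d dvd nn \<and> S = {j. d dvd (j - s0)})"
lemma dd: "0 < dd" "dd dvd nn" "S = {j. dd dvd (j - s0)}"
  using someI_ex[OF d_ex] unfolding dd_def by blast+

lemma c_inj: "inj_on c {0..<nn}"
proof (rule inj_onI)
  fix i j assume i: "i \<in> {0..<nn}" and j: "j \<in> {0..<nn}" and e: "c i = c j"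
  have d: "distinct vs0" and n: "0 < length vs0" using vs0(2) cl by blast+
  have "i mod nn = j mod nn" using e cyc_eq_iff[OF d n] unfolding nn_def by simp
  thus "i = j" using i j by simp
qed

lemma Tset_img: "Tset = c ` {j \<in> {0..<nn}. dd dvd (j - s0)}"
proof (intro Set.set_eqI iffI)
  fix x assume x: "x \<in> Tset"
  hence "x \<in> range c" using cverts_I0 unfolding Tset_def by simp
  then obtain j where j: "x = c j" by auto
  define j' where "j' = j mod nn"
  have j'r: "j' \<in> {0..<nn}" using nn_pos unfolding j'_def by simp
  have cj: "c j' = x" using j cyc_mod[of vs0 j] unfolding j'_def nn_def by simp
  hence "j' \<in> S" using x unfolding S_def by simp
  hence "dd dvd (j' - s0)" using dd(3) by simp
  thus "x \<in> c ` {j \<in> {0..<nn}. dd dvd (j - s0)}" using j'r cj by force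
next
  fix x assume "x \<in> c ` {j \<in> {0..<nn}. dd dvd (j - s0)}"
  then obtain j where j: "x = c j" "dd dvd (j - s0)" by blast
  hence "j \<in> S" using dd(3) by simp
  thus "x \<in> Tset" using j unfolding S_def by simp
qed

lemma card_Tset: "card Tset = nat (nn div dd)"
proof -
  have "card Tset = card {j \<in> {0..<nn}. dd dvd (j - s0)}"
    unfolding Tset_img by (rule card_image[OF inj_on_subset[OF c_inj]]) blast
  also have "\<dots> = nat (nn div dd)" by (rule card_cong[OF dd(1) dd(2) nn_pos])
  finally show ?thesis .
qed

lemma att_val: "att V E G = nat (nn div dd)"
  using att_eq[OF x0V] card_Tset unfolding K_def Tset_def I0_def O0_def by simp

lemma rad_val: "2 * rad V E G = length vs0"
  using rad_eq[OF I0(1)] card_cverts_len[OF vs0(2)] vs0(1) by simp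

lemma P_par: "nb I0 (c j) = inn (c j) \<longleftrightarrow> (even j \<longleftrightarrow> even s0)"
proof -
  have t: "nb I0 (c k) = inn (c k) \<longleftrightarrow> (nb I0 (c 0) = inn (c 0) \<longleftrightarrow> even k)" for k
    using tp_int[OF vs0(2), of k] vs0(1) by simp
  have "nb I0 (c s0) = inn (c s0)" using s0(1) I0(3) by simp
  thus ?thesis using t[of j] t[of s0] by blast
qed

lemma mixed_iff: "mixed \<longleftrightarrow> odd dd"
proof
  assume mixed
  then obtain w where w: "w \<in> cverts I0" "w \<in> cverts O0" "nb I0 w = out w" unfolding mixed_def by blast
  have wv: "w \<in> V" using subsetD[OF cverts_V[OF I0(1)] w(1)] .
  have "w \<in> range c" using w(1) cverts_I0 by simp
  then obtain j where j: "w = c j" by auto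
  have "j \<in> S" using w j unfolding S_def Tset_def by simp
  hence dj: "dd dvd (j - s0)" using dd(3) by simp
  have "\<not> nb I0 (c j) = inn (c j)" using w(3) j inn_ne_out[OF wv] by simp
  hence "odd (j - s0)" using P_par[of j] by simp
  thus "odd dd" using dj by (meson dvd_trans)
next
  assume od: "odd dd"
  let ?j = "s0 + dd"
  have "?j \<in> S" using dd(3) by simp
  hence cj: "c ?j \<in> cverts I0" "c ?j \<in> cverts O0" unfolding S_def Tset_def by simp_all
  have "\<not> (even ?j \<longleftrightarrow> even s0)" using od by simp
  hence "\<not> nb I0 (c ?j) = inn (c ?j)" using P_par[of ?j] by simp
  hence "nb I0 (c ?j) = out (c ?j)" using nb_cases[OF I0(1) cj(1)] by blast
  thus mixed unfolding mixed_def using cj by blast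
qed

lemma dvd_iff: "att V E G dvd rad V E G \<longleftrightarrow> even dd"
proof -
  define a where "a = nn div dd"
  have nda: "nn = dd * a" using dd(2) unfolding a_def by simp
  have a0: "0 < a" using nda nn_pos dd(1) by (simp add: zero_less_mult_iff)
  have ev: "even nn" using len_even[OF vs0(2)] unfolding nn_def by simp
  have r: "int (rad V E G) = nn div 2" using rad_val unfolding nn_def by simp
  have "att V E G dvd rad V E G \<longleftrightarrow> int (att V E G) dvd int (rad V E G)" by (rule int_dvd_int_iff[symmetric])
  also have "int (att V E G) = a" using att_val a0 unfolding a_def by simp
  finally show ?thesis using r arith_int[OF dd(1) a0 nda ev] by simp
qed

lemma att_pos: "0 < att V E G"
  using att_val dd(1) dd(2) nn_pos by (simp add: pos_imp_zdiv_pos_iff zdvd_imp_le)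

lemma arc_iff: "arc_transitive (cyc_act ` G) AC (alt_adj V E G) \<longleftrightarrow> \<not> att V E G dvd rad V E G"
  using arc_mixed mixed_arc mixed_iff dvd_iff by blast

lemma val_real: assumes C: "C \<in> AC"
  shows "real (card {D. alt_adj V E G C D}) = 2 * real (rad V E G) / real (att V E G)"
proof -
  have "att V E G * card {D. alt_adj V E G C D} = 2 * rad V E G"
    using valence[OF C x0V] att_eq[OF x0V] rad_eq[OF C] by simp
  hence "real (att V E G) * real (card {D. alt_adj V E G C D}) = 2 * real (rad V E G)"
    by (metis of_nat_mult of_nat_numeral)
  thus ?thesis using att_pos by (simp add: field_simps)
qed

end

theorem proposition2p1:
  fixes V :: "'a set" and E :: "'a \<Rightarrow> 'a \<Rightarrow> bool" and G :: "('a \<Rightarrow> 'a) set"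
  assumes "simple_graph V E" and "connected_graph V E" and "tetravalent V E"
    and "subgroup G (BijGroup V)" and "G \<subseteq> Aut V E"
    and "half_arc_transitive V E G"
    and "card (alt_cycles V E G) \<ge> 3"
  shows "(\<forall>C\<in>alt_cycles V E G.
            real (card {D. alt_adj V E G C D}) = 2 * real (rad V E G) / real (att V E G))
       \<and> (\<forall>g\<in>G. \<forall>C\<in>alt_cycles V E G. cyc_act g C \<in> alt_cycles V E G)
       \<and> vertex_transitive (cyc_act ` G) (alt_cycles V E G)
       \<and> edge_transitive (cyc_act ` G) (alt_cycles V E G) (alt_adj V E G)
       \<and> (arc_transitive (cyc_act ` G) (alt_cycles V E G) (alt_adj V E G)
            \<longleftrightarrow> \<not> att V E G dvd rad V E G)"
proof -
  have h: "hat V E G" unfolding hat_def using assms by blast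
  interpret hat V E G by (rule h)
  show ?thesis using val_real act_AC act_vtrans act_etrans arc_iff by blast
qed

end
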